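(* Let $n\ge1$. The restriction of $\Phi$ to $\mathfrak{S}_n(231)$ is a bijection from $\mathfrak{S}_n(231)$ onto $\mathfrak{S}_n(321)$. Moreover, for $\sigma\in\mathfrak{S}_n(231)$, $$(31\text{-}2,\ \mathsf{des},\ \mathsf{asc}^\infty,\ \mathsf{lda}-\mathsf{fmax},\ \mathsf{ldd},\ \mathsf{lval},\ \mathsf{lpk},\ \mathsf{fmax})\,\sigma=(\mathsf{icr},\ \mathsf{drop},\ \mathsf{exc}+\mathsf{fix},\ \mathsf{cda},\ \mathsf{cdd},\ \mathsf{cval},\ \mathsf{cpk},\ \mathsf{fix})\,\Phi(\sigma)$$ $$=(\mathsf{cros},\ \mathsf{exc},\ \mathsf{drop}+\mathsf{fix},\ \mathsf{cdd},\ \mathsf{cda},\ \mathsf{cval},\ \mathsf{cpk},\ \mathsf{fix})\,(\Phi(\sigma))^{-1}.$$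
   Context: The map $\Phi:\mathfrak{S}_n\to\mathfrak{S}_n$: for $\rho\in\mathfrak{S}_n$, a letter $\rho(i)$ is a descent top if $i\le n-1$ and $\rho(i)>\rho(i+1)$, a descent bottom if $i\ge2$ and $\rho(i-1)>\rho(i)$; otherwise a nondescent top (resp. bottom). For $x=\rho(i)$ let $c(x)=\#\{j:i<j<n,\ \rho(j+1)<x<\rho(j)\}$. Let $f$ (resp. $g$) be the increasing word of descent bottoms (resp. nondescent bottoms); $f'$ the arrangement of the descent tops in which each letter $x$ has exactly $c(x)$ larger letters to its left; $g'$ the arrangement of the nondescent tops in which each letter $x$ has exactly $c(x)$ smaller letters to its right. With the two-row array of top row $fg$ and bottom row $f'g'$, $\Phi(\rho)=\tau$ with $\tau(b)=a$ for each column (top $a$, bottom $b$). Statistics of $\sigma$: $(31\text{-}2)\sigma=\#\{(i,j):i+1<j\le n,\ \sigma(i+1)<\sigma(j)<\sigma(i)\}$; $\mathsf{des}\,\sigma=\#\{i\in[n-1]:\sigma(i)>\sigma(i+1)\}$; $\mathsf{asc}^\infty\sigma=\#\{i\in[n]:\sigma(i)<\sigma(i+1)\}$ with $\sigma(n+1)=\infty$ (i.e. $n-\mathsf{des}\,\sigma$). With convention $\sigma(0)=0,\sigma(n+1)=\infty$: $\mathsf{lpk},\mathsf{lval},\mathsf{lda},\mathsf{ldd}$ count $i\in[n]$ with $\sigma(i-1)<\sigma(i)>\sigma(i+1)$, $\sigma(i-1)>\sigma(i)<\sigma(i+1)$, $\sigma(i-1)<\sigma(i)<\sigma(i+1)$,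 $\sigma(i-1)>\sigma(i)>\sigma(i+1)$ respectively; $\mathsf{fmax}$ counts such double ascents that are left-to-right maxima. Statistics of $\pi$: $\mathsf{exc},\mathsf{drop},\mathsf{fix}$ count $i$ with $\pi(i)>i$, $\pi(i)<i$, $\pi(i)=i$; $\mathsf{cpk},\mathsf{cval},\mathsf{cda},\mathsf{cdd}$ count values $x$ with $\pi^{-1}(x)<x>\pi(x)$, $\pi^{-1}(x)>x<\pi(x)$, $\pi^{-1}(x)<x<\pi(x)$, $\pi^{-1}(x)>x>\pi(x)$; $\mathsf{cros}\,\pi=\sum_i\#\{j:j<i<\pi(j)<\pi(i)\text{ or }\pi(i)<\pi(j)\le i<j\}$ and $\mathsf{icr}\,\pi=\mathsf{cros}\,\pi^{-1}$. *)

theory Defs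
  imports Main "HOL-Combinatorics.Permutations"
begin

text \<open>Permutations of [n] are functions nat => nat permuting {1..n}
  (identity outside {1..n}).\<close>

definition avoids231 :: "nat \<Rightarrow> (nat \<Rightarrow> nat) \<Rightarrow> bool" where
  "avoids231 n s \<longleftrightarrow> \<not> (\<exists>i j k. 1 \<le> i \<and> i < j \<and> j < k \<and> k \<le> n \<and> s k < s i \<and> s i < s j)"

definition avoids321 :: "nat \<Rightarrow> (nat \<Rightarrow> nat) \<Rightarrow> bool" where
  "avoids321 n s \<longleftrightarrow> \<not> (\<exists>i j k. 1 \<le> i \<and> i < j \<and> j < k \<and> k \<le> n \<and> s i > s j \<and> s j > s k)"

definition S231 :: "nat \<Rightarrow> (nat \<Rightarrow> nat) set" where
  "S231 n = {s. s permutes {1..n} \<and> avoids231 n s}"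

definition S321 :: "nat \<Rightarrow> (nat \<Rightarrow> nat) set" where
  "S321 n = {s. s permutes {1..n} \<and> avoids321 n s}"

definition desc_tops :: "nat \<Rightarrow> (nat \<Rightarrow> nat) \<Rightarrow> nat set" where
  "desc_tops n r = {r i | i. 1 \<le> i \<and> i \<le> n - 1 \<and> r i > r (Suc i)}"

definition nondesc_tops :: "nat \<Rightarrow> (nat \<Rightarrow> nat) \<Rightarrow> nat set" where
  "nondesc_tops n r = r ` {1..n} - desc_tops n r"

definition desc_bots :: "nat \<Rightarrow> (nat \<Rightarrow> nat) \<Rightarrow> nat set" where
  "desc_bots n r = {r i | i. 2 \<le> i \<and> i \<le> n \<and> r (i - 1) > r i}"

definition nondesc_bots :: "nat \<Rightarrow> (nat \<Rightarrow> nat) \<Rightarrow> nat set" where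
  "nondesc_bots n r = r ` {1..n} - desc_bots n r"

definition cval_phi :: "nat \<Rightarrow> (nat \<Rightarrow> nat) \<Rightarrow> nat \<Rightarrow> nat" where
  "cval_phi n r x = card {j. \<exists>i. 1 \<le> i \<and> i \<le> n \<and> r i = x \<and> i < j \<and> j < n \<and> r (Suc j) < x \<and> x < r j}"

definition f_prime :: "nat \<Rightarrow> (nat \<Rightarrow> nat) \<Rightarrow> nat list" where
  "f_prime n r = (THE w. distinct w \<and> set w = desc_tops n r \<and>
     (\<forall>k < length w. card {j. j < k \<and> w ! j > w ! k} = cval_phi n r (w ! k)))"

definition g_prime :: "nat \<Rightarrow> (nat \<Rightarrow> nat) \<Rightarrow> nat list" where
  "g_prime n r = (THE w. distinct w \<and> set w = nondesc_tops n r \<and>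
     (\<forall>k < length w. card {j. k < j \<and> j < length w \<and> w ! j < w ! k} = cval_phi n r (w ! k)))"

definition Phi :: "nat \<Rightarrow> (nat \<Rightarrow> nat) \<Rightarrow> (nat \<Rightarrow> nat)" where
  "Phi n r = (let top = sorted_list_of_set (desc_bots n r) @ sorted_list_of_set (nondesc_bots n r);
                  bot = f_prime n r @ g_prime n r
              in (\<lambda>b. case map_of (zip bot top) b of Some a \<Rightarrow> a | None \<Rightarrow> b))"

text \<open>Extension with s(0)=0 and s(n+1)=infinity (represented by n+1).\<close>
definition ext :: "nat \<Rightarrow> (nat \<Rightarrow> nat) \<Rightarrow> nat \<Rightarrow> nat" where
  "ext n s i = (if i = 0 then 0 else if i = n + 1 then n + 1 else s i)"

definition st312 :: "nat \<Rightarrow> (nat \<Rightarrow> nat) \<Rightarrow> nat" where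
  "st312 n s = card {(i, j). 1 \<le> i \<and> i + 1 < j \<and> j \<le> n \<and> s (i + 1) < s j \<and> s j < s i}"

definition des :: "nat \<Rightarrow> (nat \<Rightarrow> nat) \<Rightarrow> nat" where
  "des n s = card {i. 1 \<le> i \<and> i \<le> n - 1 \<and> s i > s (i + 1)}"

definition asc_inf :: "nat \<Rightarrow> (nat \<Rightarrow> nat) \<Rightarrow> nat" where
  "asc_inf n s = card {i \<in> {1..n}. ext n s i < ext n s (i + 1)}"

definition lpk :: "nat \<Rightarrow> (nat \<Rightarrow> nat) \<Rightarrow> nat" where
  "lpk n s = card {i \<in> {1..n}. ext n s (i - 1) < ext n s i \<and> ext n s i > ext n s (i + 1)}"

definition lval :: "nat \<Rightarrow> (nat \<Rightarrow> nat) \<Rightarrow> nat" where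
  "lval n s = card {i \<in> {1..n}. ext n s (i - 1) > ext n s i \<and> ext n s i < ext n s (i + 1)}"

definition lda :: "nat \<Rightarrow> (nat \<Rightarrow> nat) \<Rightarrow> nat" where
  "lda n s = card {i \<in> {1..n}. ext n s (i - 1) < ext n s i \<and> ext n s i < ext n s (i + 1)}"

definition ldd :: "nat \<Rightarrow> (nat \<Rightarrow> nat) \<Rightarrow> nat" where
  "ldd n s = card {i \<in> {1..n}. ext n s (i - 1) > ext n s i \<and> ext n s i > ext n s (i + 1)}"

definition fmax :: "nat \<Rightarrow> (nat \<Rightarrow> nat) \<Rightarrow> nat" where
  "fmax n s = card {i \<in> {1..n}. ext n s (i - 1) < ext n s i \<and> ext n s i < ext n s (i + 1)
                     \<and> (\<forall>j. 1 \<le> j \<and> j < i \<longrightarrow> s j < s i)}"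

definition exc :: "nat \<Rightarrow> (nat \<Rightarrow> nat) \<Rightarrow> nat" where
  "exc n p = card {i \<in> {1..n}. p i > i}"

definition drop_st :: "nat \<Rightarrow> (nat \<Rightarrow> nat) \<Rightarrow> nat" where
  "drop_st n p = card {i \<in> {1..n}. p i < i}"

definition fix_st :: "nat \<Rightarrow> (nat \<Rightarrow> nat) \<Rightarrow> nat" where
  "fix_st n p = card {i \<in> {1..n}. p i = i}"

definition cpk :: "nat \<Rightarrow> (nat \<Rightarrow> nat) \<Rightarrow> nat" where
  "cpk n p = card {x \<in> {1..n}. inv p x < x \<and> x > p x}"

definition cval :: "nat \<Rightarrow> (nat \<Rightarrow> nat) \<Rightarrow> nat" where
  "cval n p = card {x \<in> {1..n}. inv p x > x \<and> x < p x}"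

definition cda :: "nat \<Rightarrow> (nat \<Rightarrow> nat) \<Rightarrow> nat" where
  "cda n p = card {x \<in> {1..n}. inv p x < x \<and> x < p x}"

definition cdd :: "nat \<Rightarrow> (nat \<Rightarrow> nat) \<Rightarrow> nat" where
  "cdd n p = card {x \<in> {1..n}. inv p x > x \<and> x > p x}"

definition cros :: "nat \<Rightarrow> (nat \<Rightarrow> nat) \<Rightarrow> nat" where
  "cros n p = (\<Sum>i\<in>{1..n}. card {j \<in> {1..n}. (j < i \<and> i < p j \<and> p j < p i) \<or> (p i < p j \<and> p j \<le> i \<and> i < j)})"

definition icr :: "nat \<Rightarrow> (nat \<Rightarrow> nat) \<Rightarrow> nat" where
  "icr n p = cros n (inv p)"

end

theory Submission
  imports Defs
begin

definition Dset :: "nat \<Rightarrow> (nat\<Rightarrow>nat) \<Rightarrow> nat set" where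
  "Dset n s = {i. 1 \<le> i \<and> i < n \<and> s (Suc i) < s i}"
definition pe :: "nat \<Rightarrow> (nat\<Rightarrow>nat) \<Rightarrow> bool" where
  "pe n s \<longleftrightarrow> bij_betw s {1..n} {1..n}"
definition strd :: "nat \<Rightarrow> (nat\<Rightarrow>nat) \<Rightarrow> nat \<Rightarrow> nat" where
  "strd n s x = card {i \<in> Dset n s. s (Suc i) \<le> x \<and> x < s i}"
definition Valid :: "nat \<Rightarrow> nat set \<Rightarrow> nat set \<Rightarrow> bool" where
  "Valid n T B \<longleftrightarrow> T \<subseteq> {1..n} \<and> B \<subseteq> {1..n} \<and> card T = card B \<and>
     (\<forall>m. card {t\<in>T. t \<le> m} \<le> card {b\<in>B. b < m})"

lemma tops_eq: "desc_tops n s = s ` Dset n s"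
  unfolding desc_tops_def Dset_def by auto

lemma bots_eq: "desc_bots n s = s ` Suc ` Dset n s"
proof -
  have "desc_bots n s = {s i | i. 2 \<le> i \<and> i \<le> n \<and> s (i - 1) > s i}" by (simp add: desc_bots_def)
  also have "\<dots> = s ` Suc ` Dset n s"
  proof (intro equalityI subsetI)
    fix x assume "x \<in> {s i | i. 2 \<le> i \<and> i \<le> n \<and> s (i - 1) > s i}"
    then obtain i where i: "x = s i" "2 \<le> i" "i \<le> n" "s (i - 1) > s i" by blast
    then have "i - 1 \<in> Dset n s" "i = Suc (i - 1)" unfolding Dset_def by auto
    then show "x \<in> s ` Suc ` Dset n s" using i(1) by (metis image_eqI)
  next
    fix x assume "x \<in> s ` Suc ` Dset n s"
    then obtain i where "i \<in> Dset n s" "x = s (Suc i)" by blast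
    then show "x \<in> {s i | i. 2 \<le> i \<and> i \<le> n \<and> s (i - 1) > s i}"
      unfolding Dset_def by (intro CollectI exI[of _ "Suc i"]) auto
  qed
  finally show ?thesis .
qed

lemma Dset_sub: "Dset n s \<subseteq> {1..<n}" unfolding Dset_def by auto
lemma finite_Dset[simp]: "finite (Dset n s)" using Dset_sub finite_subset by blast

lemma pe_inj: "pe n s \<Longrightarrow> inj_on s {1..n}" unfolding pe_def bij_betw_def by auto
lemma pe_range: "pe n s \<Longrightarrow> i \<in> {1..n} \<Longrightarrow> s i \<in> {1..n}" unfolding pe_def bij_betw_def by auto
lemma pe_eq: "pe n s \<Longrightarrow> i \<in> {1..n} \<Longrightarrow> j \<in> {1..n} \<Longrightarrow> s i = s j \<longleftrightarrow> i = j"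
  using pe_inj inj_on_eq_iff by metis
lemma pe_surj: "pe n s \<Longrightarrow> y \<in> {1..n} \<Longrightarrow> \<exists>i\<in>{1..n}. s i = y"
  unfolding pe_def bij_betw_def by (metis imageE)

lemma card_tops: "pe n s \<Longrightarrow> card (desc_tops n s) = card (Dset n s)"
  unfolding tops_eq
  by (rule card_image, rule inj_on_subset[OF pe_inj]) (auto simp: Dset_def)

lemma card_bots: "pe n s \<Longrightarrow> card (desc_bots n s) = card (Dset n s)"
proof -
  assume p: "pe n s"
  have "card (s ` Suc ` Dset n s) = card (Suc ` Dset n s)"
    by (rule card_image, rule inj_on_subset[OF pe_inj[OF p]]) (auto simp: Dset_def)
  then show ?thesis unfolding bots_eq by (simp add: card_image)
qed

lemma tops_sub: "pe n s \<Longrightarrow> desc_tops n s \<subseteq> {1..n}"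
  unfolding tops_eq using Dset_sub pe_range by fastforce
lemma bots_sub: "pe n s \<Longrightarrow> desc_bots n s \<subseteq> {1..n}"
  unfolding bots_eq using Dset_sub pe_range by fastforce

lemma valid_perm: assumes p: "pe n s" shows "Valid n (desc_tops n s) (desc_bots n s)"
proof -
  have "card {t\<in>desc_tops n s. t \<le> m} \<le> card {b\<in>desc_bots n s. b < m}" for m
  proof -
    have e1: "{t\<in>desc_tops n s. t \<le> m} = s ` {i \<in> Dset n s. s i \<le> m}" unfolding tops_eq by auto
    have e2: "s ` Suc ` {i \<in> Dset n s. s i \<le> m} \<subseteq> {b\<in>desc_bots n s. b < m}"
      unfolding bots_eq Dset_def by auto
    have "card {t\<in>desc_tops n s. t \<le> m} = card {i \<in> Dset n s. s i \<le> m}"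
      unfolding e1 by (rule card_image, rule inj_on_subset[OF pe_inj[OF p]]) (auto simp: Dset_def)
    also have "\<dots> = card (Suc ` {i \<in> Dset n s. s i \<le> m})" by (simp add: card_image)
    also have "\<dots> = card (s ` Suc ` {i \<in> Dset n s. s i \<le> m})"
      by (rule card_image[symmetric], rule inj_on_subset[OF pe_inj[OF p]]) (auto simp: Dset_def)
    also have "\<dots> \<le> card {b\<in>desc_bots n s. b < m}"
      by (rule card_mono[OF _ e2]) (use bots_sub[OF p] finite_subset in auto)
    finally show ?thesis .
  qed
  then show ?thesis unfolding Valid_def using tops_sub[OF p] bots_sub[OF p] card_tops[OF p] card_bots[OF p] by auto
qed


lemma card_img_pe: "pe n s \<Longrightarrow> A \<subseteq> {1..n} \<Longrightarrow> card (s ` A) = card A"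
  by (rule card_image, rule inj_on_subset[OF pe_inj])

lemma lemH: assumes p: "pe n s"
  shows "card {b\<in>desc_bots n s. b \<le> x} = card {t\<in>desc_tops n s. t \<le> x} + strd n s x"
proof -
  let ?D = "Dset n s"
  have e1: "{b\<in>desc_bots n s. b \<le> x} = s ` Suc ` {i\<in>?D. s (Suc i) \<le> x}" unfolding bots_eq by auto
  have e2: "{t\<in>desc_tops n s. t \<le> x} = s ` {i\<in>?D. s i \<le> x}" unfolding tops_eq by auto
  have c1: "card {b\<in>desc_bots n s. b \<le> x} = card {i\<in>?D. s (Suc i) \<le> x}"
    unfolding e1 by (subst card_img_pe[OF p]) (auto simp: Dset_def card_image)
  have c2: "card {t\<in>desc_tops n s. t \<le> x} = card {i\<in>?D. s i \<le> x}"
    unfolding e2 by (subst card_img_pe[OF p]) (auto simp: Dset_def)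
  have sp: "{i\<in>?D. s (Suc i) \<le> x} = {i\<in>?D. s i \<le> x} \<union> {i \<in> ?D. s (Suc i) \<le> x \<and> x < s i}"
    by (auto simp: Dset_def)
  have "card {i\<in>?D. s (Suc i) \<le> x} = card {i\<in>?D. s i \<le> x} + card {i \<in> ?D. s (Suc i) \<le> x \<and> x < s i}"
    unfolding sp by (rule card_Un_disjoint) auto
  then show ?thesis using c1 c2 unfolding strd_def by simp
qed

lemma walk: fixes s :: "nat \<Rightarrow> nat" shows "a < k \<Longrightarrow> x < s a \<Longrightarrow> s k \<le> x \<Longrightarrow> \<exists>i. a \<le> i \<and> i < k \<and> x < s i \<and> s (Suc i) \<le> x"
proof (induction k)
  case 0 then show ?case by simp
next
  case (Suc k)
  show ?case
  proof (cases "a = k")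
    case True then show ?thesis using Suc by auto
  next
    case False
    then have "a < k" using Suc by simp
    show ?thesis
    proof (cases "x < s k")
      case True then show ?thesis using Suc \<open>a < k\<close> by (intro exI[of _ k]) auto
    next
      case False
      then have sk: "s k \<le> x" by simp
      have "\<exists>i\<ge>a. i < k \<and> x < s i \<and> s (Suc i) \<le> x" by (rule Suc.IH[OF \<open>a < k\<close> Suc(3) sk])
      then obtain i where "a \<le> i" "i < k" "x < s i" "s (Suc i) \<le> x" by blast
      then show ?thesis by (intro exI[of _ i]) auto
    qed
  qed
qed

lemma walkD: assumes "1 \<le> a" "a < k" "k \<le> n" "x < s a" "s k \<le> x"
  shows "strd n s x > 0"
proof -
  obtain i where i: "a \<le> i" "i < k" "x < s i" "s (Suc i) \<le> x" using walk[OF assms(2,4,5)] by blast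
  then have "i \<in> {i \<in> Dset n s. s (Suc i) \<le> x \<and> x < s i}" using assms unfolding Dset_def by auto
  then show ?thesis unfolding strd_def by (auto simp: card_gt_0_iff)
qed

lemma lemZ: assumes p: "pe n s" and x: "x \<le> n" and z: "strd n s x = 0"
  shows "s ` {1..x} = {1..x}"
proof -
  have sub: "s ` {1..x} \<subseteq> {1..x}"
  proof
    fix y assume "y \<in> s ` {1..x}"
    then obtain i where i: "i \<in> {1..x}" "y = s i" by blast
    have yr: "y \<in> {1..n}" using pe_range[OF p] i x by auto
    show "y \<in> {1..x}"
    proof (rule ccontr)
      assume "y \<notin> {1..x}"
      then have yx: "x < s i" using yr i by auto
      have ci: "card (s ` {1..x}) = card {1..x}" using card_img_pe[OF p] x by auto
      have "\<not> {1..x} \<subseteq> s ` {1..x}"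
      proof
        assume "{1..x} \<subseteq> s ` {1..x}"
        then have "{1..x} = s ` {1..x}" using ci by (intro card_subset_eq) auto
        then show False using i \<open>y \<notin> {1..x}\<close> by auto
      qed
      then obtain v where v: "v \<in> {1..x}" "v \<notin> s ` {1..x}" by blast
      obtain k where k: "k \<in> {1..n}" "s k = v" using pe_surj[OF p, of v] v x by auto
      have "k > x" using k v by (metis atLeastAtMost_iff imageI not_le)
      have "strd n s x > 0" by (rule walkD[of i k n x s]) (use i k v \<open>k > x\<close> yx in auto)
      then show False using z by simp
    qed
  qed
  have ci: "card (s ` {1..x}) = card {1..x}" using card_img_pe[OF p] x by auto
  show ?thesis by (rule card_subset_eq[OF _ sub]) (use ci in auto)
qed

lemma lemZ': assumes p: "pe n s" and x: "x \<le> n" and z: "strd n s x = 0"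
  and k: "k \<in> {1..n}" "s k \<le> x" shows "k \<le> x"
proof (rule ccontr)
  assume "\<not> k \<le> x"
  have "s k \<in> s ` {1..x}" using lemZ[OF p x z] k pe_range[OF p k(1)] by auto
  then obtain i where "i \<in> {1..x}" "s i = s k" by auto
  then show False using pe_eq[OF p, of i k] k x \<open>\<not> k \<le> x\<close> by auto
qed


definition smo :: "nat set \<Rightarrow> (nat \<Rightarrow> nat) \<Rightarrow> bool" where
  "smo S f \<longleftrightarrow> (\<forall>a\<in>S. \<forall>b\<in>S. a < b \<longrightarrow> f a < f b)"

definition smono :: "nat \<Rightarrow> nat set \<Rightarrow> nat set \<Rightarrow> (nat\<Rightarrow>nat) \<Rightarrow> bool" where
  "smono n T B t \<longleftrightarrow> t permutes {1..n} \<and> T \<subseteq> {1..n} \<and> B \<subseteq> {1..n} \<and> t ` T = B \<and>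
     t ` ({1..n} - T) = {1..n} - B \<and> smo T t \<and> smo ({1..n} - T) t"

lemma smo_inj: "smo S f \<Longrightarrow> inj_on f S"
  unfolding smo_def inj_on_def by (metis linorder_neqE_nat less_irrefl)

lemma smo_less_iff: "smo S f \<Longrightarrow> a \<in> S \<Longrightarrow> b \<in> S \<Longrightarrow> f a < f b \<longleftrightarrow> a < b"
  unfolding smo_def by (metis less_asym nat_neq_iff)

lemma rank_smo: assumes "smo S f" "f ` S = S'" "x \<in> S"
  shows "card {y\<in>S'. y < f x} = card {y\<in>S. y < x}"
proof -
  have "{y\<in>S'. y < f x} = f ` {y\<in>S. y < x}"
    using assms smo_less_iff[OF assms(1)] by auto
  moreover have "inj_on f {y\<in>S. y < x}" using smo_inj[OF assms(1)] by (rule inj_on_subset) auto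
  ultimately show ?thesis by (simp add: card_image)
qed

lemma rank_strict: fixes S :: "nat set" assumes "finite S" "a \<in> S" "a < b"
  shows "card {y\<in>S. y < a} < card {y\<in>S. y < b}"
  by (rule psubset_card_mono) (use assms in auto)

lemma rank_mono: fixes S :: "nat set" assumes "finite S" "a \<le> b"
  shows "card {y\<in>S. y < a} \<le> card {y\<in>S. y < b}"
  by (rule card_mono) (use assms in auto)

lemma smo_unique: assumes "smo S f" "smo S g" "f ` S = S'" "g ` S = S'" "finite S" "x \<in> S"
  shows "f x = g x"
proof -
  have fin: "finite S'" using assms(3,5) by blast
  have r: "card {y\<in>S'. y < f x} = card {y\<in>S'. y < g x}"
    using rank_smo[OF assms(1,3,6)] rank_smo[OF assms(2,4,6)] by simp
  have "f x \<in> S'" "g x \<in> S'" using assms by auto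
  then show ?thesis using rank_strict[OF fin, of "f x" "g x"] rank_strict[OF fin, of "g x" "f x"] r
    by (metis less_irrefl nat_neq_iff)
qed

lemma smono_unique: assumes "smono n T B t1" "smono n T B t2" shows "t1 = t2"
proof
  fix x
  show "t1 x = t2 x"
  proof (cases "x \<in> {1..n}")
    case False then show ?thesis using assms unfolding smono_def permutes_def by auto
  next
    case True
    show ?thesis
    proof (cases "x \<in> T")
      case True then show ?thesis using assms smo_unique[of T t1 t2 B] unfolding smono_def
        by (meson finite_atLeastAtMost finite_subset)
    next
      case False then show ?thesis using assms smo_unique[of "{1..n} - T" t1 t2 "{1..n} - B"] \<open>x \<in> {1..n}\<close>
        unfolding smono_def by auto
    qed
  qed
qed

lemma card_split_lt: fixes S :: "nat set" assumes "S \<subseteq> {1..n}"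
  shows "card {y\<in>{1..n} - S. y < x} + card {y\<in>S. y < x} = card {y\<in>{1..n}. y < x}"
proof -
  have "{y\<in>{1..n}. y < x} = {y\<in>{1..n} - S. y < x} \<union> {y\<in>S. y < x}" using assms by auto
  moreover have "finite {y\<in>S. y < x}" by (rule finite_subset[of _ "{1..n}"]) (use assms in auto)
  ultimately show ?thesis by (subst card_Un_disjoint[symmetric]) auto
qed

context
  fixes n T B t
  assumes sm: "smono n T B t" and va: "Valid n T B"
begin

lemma sm_perm: "t permutes {1..n}" using sm unfolding smono_def by auto
lemma sm_T: "T \<subseteq> {1..n}" using sm unfolding smono_def by auto
lemma sm_B: "B \<subseteq> {1..n}" using sm unfolding smono_def by auto
lemma finT: "finite T" using sm_T finite_subset by blast
lemma finB: "finite B" using sm_B finite_subset by blast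

lemma A1: assumes x: "x \<in> T" shows "t x < x"
proof (rule ccontr)
  assume "\<not> t x < x"
  have r: "card {y\<in>B. y < t x} = card {y\<in>T. y < x}"
    using rank_smo[of T t B x] sm x unfolding smono_def by auto
  have "{y\<in>T. y \<le> x} = insert x {y\<in>T. y < x}" using x by auto
  then have "card {y\<in>T. y \<le> x} = card {y\<in>T. y < x} + 1" using finT by simp
  moreover have "card {y\<in>T. y \<le> x} \<le> card {b\<in>B. b < x}" using va unfolding Valid_def by auto
  moreover have "card {b\<in>B. b < x} \<le> card {y\<in>B. y < t x}" using rank_mono[OF finB] \<open>\<not> t x < x\<close> by simp
  ultimately show False using r by simp
qed

lemma A2: assumes x: "x \<in> {1..n}" "x \<notin> T" shows "x \<le> t x"
proof (rule ccontr)
  assume "\<not> x \<le> t x"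
  then have lt: "t x < x" by simp
  have xc: "x \<in> {1..n} - T" using x by auto
  have tc: "t x \<in> {1..n} - B" using sm xc unfolding smono_def by blast
  have r: "card {y\<in>{1..n} - B. y < t x} = card {y\<in>{1..n} - T. y < x}"
    using rank_smo[of "{1..n} - T" t "{1..n} - B" x] sm xc unfolding smono_def by auto
  have r2: "card {y\<in>{1..n} - B. y < t x} < card {y\<in>{1..n} - B. y < x}"
    by (rule rank_strict[OF _ tc lt]) simp
  have u1: "card {y\<in>{1..n} - B. y < x} + card {y\<in>B. y < x} = card {y\<in>{1..n}. y < x}"
    by (rule card_split_lt[OF sm_B])
  have u2: "card {y\<in>{1..n} - T. y < x} + card {y\<in>T. y < x} = card {y\<in>{1..n}. y < x}"
    by (rule card_split_lt[OF sm_T])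
  have v: "card {y\<in>T. y \<le> x - 1} \<le> card {b\<in>B. b < x - 1}" using va unfolding Valid_def by auto
  have "{y\<in>T. y \<le> x - 1} = {y\<in>T. y < x}" using x by auto
  then have "card {y\<in>T. y \<le> x - 1} = card {y\<in>T. y < x}" by simp
  moreover have "card {b\<in>B. b < x - 1} \<le> card {y\<in>B. y < x}" by (rule rank_mono[OF finB]) simp
  ultimately show False using r r2 u1 u2 v by linarith
qed

lemma A_drop: "x \<in> {1..n} \<Longrightarrow> t x < x \<longleftrightarrow> x \<in> T"
  using A1 A2 by (meson not_less)

lemma A_img: "x \<in> {1..n} \<Longrightarrow> t x \<in> B \<longleftrightarrow> x \<in> T"
proof -
  assume x: "x \<in> {1..n}"
  show ?thesis
  proof
    assume "t x \<in> B"
    show "x \<in> T"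
    proof (rule ccontr)
      assume "x \<notin> T"
      then have "t x \<in> {1..n} - B" using sm x unfolding smono_def by blast
      then show False using \<open>t x \<in> B\<close> by simp
    qed
  next
    assume "x \<in> T" then show "t x \<in> B" using sm unfolding smono_def by blast
  qed
qed

lemma A_321: "avoids321 n t"
  unfolding avoids321_def
proof clarify
  fix i j k assume h: "1 \<le> i" "i < j" "j < k" "k \<le> n" "t j < t i" "t k < t j"
  have m1: "smo T t" and m2: "smo ({1..n} - T) t" using sm unfolding smono_def by auto
  have r: "i \<in> {1..n}" "j \<in> {1..n}" "k \<in> {1..n}" using h by auto
  have g: "\<not> (a \<in> {1..n} \<and> b \<in> {1..n} \<and> a < b \<and> t b < t a \<and> (a \<in> T \<longleftrightarrow> b \<in> T))" for a b
  proof
    assume H: "a \<in> {1..n} \<and> b \<in> {1..n} \<and> a < b \<and> t b < t a \<and> (a \<in> T \<longleftrightarrow> b \<in> T)"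
    show False
    proof (cases "a \<in> T")
      case True then show ?thesis using H m1 unfolding smo_def by (meson less_asym)
    next
      case False then have "a \<in> {1..n} - T" "b \<in> {1..n} - T" using H by auto
      then show ?thesis using H m2 unfolding smo_def by (meson less_asym)
    qed
  qed
  have "t k < t i" using h by simp
  then show False using g[of i j] g[of j k] g[of i k] r h by (metis less_trans)
qed

lemma A_fix: assumes x: "x \<in> {1..n}"
  shows "t x = x \<longleftrightarrow> x \<notin> T \<and> x \<notin> B \<and> card {y\<in>B. y < x} = card {y\<in>T. y < x}"
proof -
  have u1: "card {y\<in>{1..n} - B. y < x} + card {y\<in>B. y < x} = card {y\<in>{1..n}. y < x}"
    by (rule card_split_lt[OF sm_B])
  have u2: "card {y\<in>{1..n} - T. y < x} + card {y\<in>T. y < x} = card {y\<in>{1..n}. y < x}"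
    by (rule card_split_lt[OF sm_T])
  show ?thesis
  proof
    assume e: "t x = x"
    then have xT: "x \<notin> T" using A1 by force
    then have xc: "x \<in> {1..n} - T" using x by auto
    then have "t x \<in> {1..n} - B" using sm unfolding smono_def by blast
    then have xB: "x \<notin> B" using e by simp
    have "card {y\<in>{1..n} - B. y < t x} = card {y\<in>{1..n} - T. y < x}"
      using rank_smo[of "{1..n} - T" t "{1..n} - B" x] sm xc unfolding smono_def by auto
    then show "x \<notin> T \<and> x \<notin> B \<and> card {y\<in>B. y < x} = card {y\<in>T. y < x}"
      using xT xB u1 u2 e by simp
  next
    assume h: "x \<notin> T \<and> x \<notin> B \<and> card {y\<in>B. y < x} = card {y\<in>T. y < x}"
    then have xc: "x \<in> {1..n} - T" and xb: "x \<in> {1..n} - B" using x by auto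
    then have tc: "t x \<in> {1..n} - B" using sm unfolding smono_def by blast
    have r: "card {y\<in>{1..n} - B. y < t x} = card {y\<in>{1..n} - T. y < x}"
      using rank_smo[of "{1..n} - T" t "{1..n} - B" x] sm xc unfolding smono_def by auto
    then have r': "card {y\<in>{1..n} - B. y < t x} = card {y\<in>{1..n} - B. y < x}" using u1 u2 h by simp
    show "t x = x"
    proof (rule ccontr)
      assume "t x \<noteq> x"
      then consider "t x < x" | "x < t x" by linarith
      then show False
      proof cases
        case 1 then show ?thesis using rank_strict[of "{1..n} - B" "t x" x] tc r' by simp
      next
        case 2 then show ?thesis using rank_strict[of "{1..n} - B" x "t x"] xb r' by simp
      qed
    qed
  qed
qed

end


definition Dr :: "nat \<Rightarrow> (nat \<Rightarrow> nat) \<Rightarrow> nat set" where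
  "Dr n t = {x\<in>{1..n}. t x < x}"

context
  fixes n t
  assumes pt: "t permutes {1..n}" and av: "avoids321 n t"
begin

lemma tinj: "inj_on t A" using pt by (rule permutes_inj_on)
lemma trange: "x \<in> {1..n} \<Longrightarrow> t x \<in> {1..n}" using permutes_in_image[OF pt] by blast
lemma timg: "t ` {1..n} = {1..n}" using pt by (rule permutes_image)

lemma no321: "1 \<le> i \<Longrightarrow> i < j \<Longrightarrow> j < k \<Longrightarrow> k \<le> n \<Longrightarrow> t j < t i \<Longrightarrow> t k < t j \<Longrightarrow> False"
  using av unfolding avoids321_def by blast

lemma smo_Dr: "smo (Dr n t) t"
  unfolding smo_def
proof (intro ballI impI)
  fix a b assume a: "a \<in> Dr n t" and b: "b \<in> Dr n t" and ab: "a < b"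
  show "t a < t b"
  proof (rule ccontr)
    assume "\<not> t a < t b"
    moreover have "t a \<noteq> t b" using tinj[of UNIV] ab unfolding inj_on_def by auto
    ultimately have ba: "t b < t a" by simp
    have ar: "a \<in> {1..n}" "t a < a" and br: "b \<in> {1..n}" "t b < b" using a b unfolding Dr_def by auto
    have tb1: "t b \<ge> 1" using trange[OF br(1)] by simp
    show False
    proof (cases "\<exists>c. 1 \<le> c \<and> c < a \<and> t a < t c")
      case True
      then obtain c where "1 \<le> c" "c < a" "t a < t c" by blast
      then show False using no321[of c a b] ab ba br by auto
    next
      case False
      have sub: "t ` {1..<a} \<subseteq> {1..<t a} - {t b}"
      proof
        fix y assume "y \<in> t ` {1..<a}"
        then obtain c where c: "c \<in> {1..<a}" "y = t c" by blast
        have "c \<noteq> a" "c \<noteq> b" using c ab by auto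
        then have "t c \<noteq> t a" "t c \<noteq> t b" using tinj[of UNIV] unfolding inj_on_def by auto
        moreover have "t c \<le> t a" using False c by auto
        moreover have "t c \<ge> 1" using trange[of c] c ar by auto
        ultimately show "y \<in> {1..<t a} - {t b}" using c by auto
      qed
      have "card (t ` {1..<a}) = a - 1" using tinj by (simp add: card_image)
      moreover have "card ({1..<t a} - {t b}) = t a - 2" using tb1 ba by simp
      moreover have "card (t ` {1..<a}) \<le> card ({1..<t a} - {t b})" by (rule card_mono[OF _ sub]) simp
      ultimately show False using ar ba tb1 by linarith
    qed
  qed
qed

lemma smo_CDr: "smo ({1..n} - Dr n t) t"
  unfolding smo_def
proof (intro ballI impI)
  fix a b assume a: "a \<in> {1..n} - Dr n t" and b: "b \<in> {1..n} - Dr n t" and ab: "a < b"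
  show "t a < t b"
  proof (rule ccontr)
    assume "\<not> t a < t b"
    moreover have "t a \<noteq> t b" using tinj[of UNIV] ab unfolding inj_on_def by auto
    ultimately have ba: "t b < t a" by simp
    have ar: "a \<in> {1..n}" "a \<le> t a" and br: "b \<in> {1..n}" "b \<le> t b" using a b unfolding Dr_def by auto
    have tan: "t a \<le> n" using trange[OF ar(1)] by simp
    show False
    proof (cases "\<exists>c. b < c \<and> c \<le> n \<and> t c < t b")
      case True
      then obtain c where "b < c" "c \<le> n" "t c < t b" by blast
      then show False using no321[of a b c] ab ba ar by auto
    next
      case False
      have sub: "t ` {b<..n} \<subseteq> {t b<..n} - {t a}"
      proof
        fix y assume "y \<in> t ` {b<..n}"
        then obtain c where c: "c \<in> {b<..n}" "y = t c" by blast
        have "c \<noteq> a" "c \<noteq> b" using c ab by auto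
        then have "t c \<noteq> t a" "t c \<noteq> t b" using tinj[of UNIV] unfolding inj_on_def by auto
        moreover have "t b \<le> t c" using False c by auto
        moreover have "t c \<le> n" using trange[of c] c br by auto
        ultimately show "y \<in> {t b<..n} - {t a}" using c by auto
      qed
      have "card (t ` {b<..n}) = n - b" using tinj by (simp add: card_image)
      moreover have "card ({t b<..n} - {t a}) = n - t b - 1" using tan ba by simp
      moreover have "card (t ` {b<..n}) \<le> card ({t b<..n} - {t a})" by (rule card_mono[OF _ sub]) simp
      ultimately show False using br ba tan by linarith
    qed
  qed
qed

lemma B_smono: "smono n (Dr n t) (t ` Dr n t) t"
proof -
  have s: "Dr n t \<subseteq> {1..n}" unfolding Dr_def by auto
  have "t ` ({1..n} - Dr n t) = t ` {1..n} - t ` Dr n t"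
    by (rule inj_on_image_set_diff[OF tinj]) (use s in auto)
  then have "t ` ({1..n} - Dr n t) = {1..n} - t ` Dr n t" using timg by simp
  moreover have "t ` Dr n t \<subseteq> {1..n}" using s timg by auto
  ultimately show ?thesis unfolding smono_def using pt s smo_Dr smo_CDr by auto
qed

lemma B_valid: "Valid n (Dr n t) (t ` Dr n t)"
proof -
  have s: "Dr n t \<subseteq> {1..n}" unfolding Dr_def by auto
  have "card {x\<in>Dr n t. x \<le> m} \<le> card {y\<in>t ` Dr n t. y < m}" for m
  proof -
    have "card {x\<in>Dr n t. x \<le> m} = card (t ` {x\<in>Dr n t. x \<le> m})" using tinj by (simp add: card_image)
    also have "\<dots> \<le> card {y\<in>t ` Dr n t. y < m}"
      by (rule card_mono) (use s timg in \<open>auto simp: Dr_def intro: finite_subset[of _ "{1..n}"]\<close>)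
    finally show ?thesis .
  qed
  moreover have "t ` Dr n t \<subseteq> {1..n}" using s timg by auto
  moreover have "card (t ` Dr n t) = card (Dr n t)" using tinj by (simp add: card_image)
  ultimately show ?thesis unfolding Valid_def using s by auto
qed

end


abbreviation sl :: "nat set \<Rightarrow> nat list" where "sl \<equiv> sorted_list_of_set"

lemma sl_strict: "sorted_wrt (<) (sl S)"
  by (cases "finite S") (simp_all add: strict_sorted_list_of_set)

lemma sl_nth_less: "i < j \<Longrightarrow> j < length (sl S) \<Longrightarrow> sl S ! i < sl S ! j"
  using sorted_wrt_nth_less[OF sl_strict] by blast

lemma sl_nth_less_iff: "i < length (sl S) \<Longrightarrow> j < length (sl S) \<Longrightarrow> sl S ! i < sl S ! j \<longleftrightarrow> i < j"
  using sl_nth_less by (metis less_asym nat_neq_iff)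

lemma sl_mem: "finite S \<Longrightarrow> x \<in> S \<longleftrightarrow> (\<exists>k < card S. x = sl S ! k)"
  by (metis in_set_conv_nth length_sorted_list_of_set set_sorted_list_of_set)

lemma sl_nth_in: "finite S \<Longrightarrow> k < card S \<Longrightarrow> sl S ! k \<in> S"
  using sl_mem by blast

lemma sl_img: assumes "finite S" shows "S = (\<lambda>k. sl S ! k) ` {..<card S}"
  using sl_mem[OF assms] by auto

lemma smono_of_lists:
  assumes T: "T \<subseteq> {1..n}" and B: "B \<subseteq> {1..n}" and c: "card T = card B"
    and h1: "\<And>k. k < card T \<Longrightarrow> t (sl T ! k) = sl B ! k"
    and h2: "\<And>k. k < card ({1..n} - T) \<Longrightarrow> t (sl ({1..n} - T) ! k) = sl ({1..n} - B) ! k"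
    and h3: "\<And>x. x \<notin> {1..n} \<Longrightarrow> t x = x"
  shows "smono n T B t"
proof -
  have fT: "finite T" and fB: "finite B" using T B finite_subset by auto
  let ?CT = "{1..n} - T" and ?CB = "{1..n} - B"
  have cc: "card ?CT = card ?CB" using c T B fT fB by (simp add: card_Diff_subset)
  have gen: "t ` S = S' \<and> smo S t"
    if fS: "finite S" and cS: "card S = card S'" and hh: "\<And>k. k < card S \<Longrightarrow> t (sl S ! k) = sl S' ! k"
      and fS': "finite S'" for S S'
  proof
    have "t ` S = t ` (\<lambda>k. sl S ! k) ` {..<card S}" using sl_img[OF fS] by simp
    also have "\<dots> = (\<lambda>k. sl S' ! k) ` {..<card S'}" using hh cS by (auto simp: image_image)
    also have "\<dots> = S'" using sl_img[OF fS'] by simp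
    finally show "t ` S = S'" .
    show "smo S t" unfolding smo_def
    proof (intro ballI impI)
      fix a b assume a: "a \<in> S" and b: "b \<in> S" and ab: "a < b"
      obtain i where i: "i < card S" "a = sl S ! i" using sl_mem[OF fS] a by blast
      obtain j where j: "j < card S" "b = sl S ! j" using sl_mem[OF fS] b by blast
      have "i < j" using sl_nth_less_iff[of i S j] i j ab by simp
      then show "t a < t b" using hh i j cS sl_nth_less[of i j S'] by simp
    qed
  qed
  have g1: "t ` T = B \<and> smo T t" using gen[OF fT c h1 fB] .
  have g2: "t ` ?CT = ?CB \<and> smo ?CT t" using gen[OF _ cc h2] by simp
  have img: "t ` {1..n} = {1..n}"
  proof -
    have "{1..n} = T \<union> ?CT" using T by auto
    then have "t ` {1..n} = t ` T \<union> t ` ?CT" by (metis image_Un)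
    also have "\<dots> = {1..n}" using g1 g2 B by auto
    finally show ?thesis .
  qed
  have "inj_on t {1..n}" by (rule eq_card_imp_inj_on) (use img in auto)
  then have "bij_betw t {1..n} {1..n}" using img by (simp add: bij_betw_def)
  then have "t permutes {1..n}" using h3 by (rule bij_imp_permutes)
  then show ?thesis unfolding smono_def using T B g1 g2 by auto
qed


lemma no231: "avoids231 n s \<Longrightarrow> 1 \<le> i \<Longrightarrow> i < j \<Longrightarrow> j < k \<Longrightarrow> k \<le> n \<Longrightarrow> s k < s i \<Longrightarrow> s i < s j \<Longrightarrow> False"
  unfolding avoids231_def by blast

lemma cval0: assumes "avoids231 n s" shows "cval_phi n s x = 0"
proof -
  have eq: "{j. \<exists>i. 1 \<le> i \<and> i \<le> n \<and> s i = x \<and> i < j \<and> j < n \<and> s (Suc j) < x \<and> x < s j} = {}"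
  proof -
    have "\<not> (\<exists>i. 1 \<le> i \<and> i \<le> n \<and> s i = x \<and> i < j \<and> j < n \<and> s (Suc j) < x \<and> x < s j)" for j
      using no231[OF assms, of _ j "Suc j"] by auto
    then show ?thesis by auto
  qed
  show ?thesis unfolding cval_phi_def eq by simp
qed

lemma card0_empty: "finite X \<Longrightarrow> card X = 0 \<Longrightarrow> a \<in> X \<Longrightarrow> False" by auto

lemma fprime: assumes av: "avoids231 n s" shows "f_prime n s = sl (desc_tops n s)"
proof -
  let ?S = "desc_tops n s"
  have fS: "finite ?S" unfolding tops_eq by simp
  show ?thesis unfolding f_prime_def
  proof (rule the_equality)
    show "distinct (sl ?S) \<and> set (sl ?S) = ?S \<and>
      (\<forall>k < length (sl ?S). card {j. j < k \<and> sl ?S ! j > sl ?S ! k} = cval_phi n s (sl ?S ! k))"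
    proof -
      have "{j. j < k \<and> sl ?S ! j > sl ?S ! k} = {}" if "k < length (sl ?S)" for k
      proof -
        have "\<not> sl ?S ! j > sl ?S ! k" if "j < k" for j using sl_nth_less[OF that \<open>k < length (sl ?S)\<close>] by simp
        then show ?thesis by auto
      qed
      then show ?thesis using fS by (simp add: cval0[OF av])
    qed
  next
    fix w assume w: "distinct w \<and> set w = ?S \<and>
      (\<forall>k < length w. card {j. j < k \<and> w ! j > w ! k} = cval_phi n s (w ! k))"
    have "sorted_wrt (<) w" unfolding sorted_wrt_iff_nth_less
    proof (intro allI impI)
      fix i j assume ij: "i < j" "j < length w"
      have "card {j'. j' < j \<and> w ! j' > w ! j} = 0" using w ij cval0[OF av] by simp
      then have "\<not> w ! i > w ! j" using card0_empty[of "{j'. j' < j \<and> w ! j' > w ! j}" i] ij by auto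
      moreover have "w ! i \<noteq> w ! j" using w ij nth_eq_iff_index_eq by fastforce
      ultimately show "w ! i < w ! j" by simp
    qed
    then show "w = sl ?S" using strict_sorted_equal[OF sl_strict, of w ?S] w fS by simp
  qed
qed

lemma gprime: assumes av: "avoids231 n s" shows "g_prime n s = sl (nondesc_tops n s)"
proof -
  let ?S = "nondesc_tops n s"
  have fS: "finite ?S" unfolding nondesc_tops_def by simp
  show ?thesis unfolding g_prime_def
  proof (rule the_equality)
    show "distinct (sl ?S) \<and> set (sl ?S) = ?S \<and>
      (\<forall>k < length (sl ?S). card {j. k < j \<and> j < length (sl ?S) \<and> sl ?S ! j < sl ?S ! k} = cval_phi n s (sl ?S ! k))"
    proof -
      have "{j. k < j \<and> j < length (sl ?S) \<and> sl ?S ! j < sl ?S ! k} = {}" for k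
      proof -
        have "\<not> sl ?S ! j < sl ?S ! k" if "k < j" "j < length (sl ?S)" for j using sl_nth_less[OF that] by simp
        then show ?thesis by auto
      qed
      then show ?thesis using fS by (simp add: cval0[OF av])
    qed
  next
    fix w assume w: "distinct w \<and> set w = ?S \<and>
      (\<forall>k < length w. card {j. k < j \<and> j < length w \<and> w ! j < w ! k} = cval_phi n s (w ! k))"
    have "sorted_wrt (<) w" unfolding sorted_wrt_iff_nth_less
    proof (intro allI impI)
      fix i j assume ij: "i < j" "j < length w"
      have "card {j'. i < j' \<and> j' < length w \<and> w ! j' < w ! i} = 0" using w ij cval0[OF av] by simp
      then have "\<not> w ! j < w ! i" using card0_empty[of "{j'. i < j' \<and> j' < length w \<and> w ! j' < w ! i}" j] ij by auto
      moreover have "w ! i \<noteq> w ! j" using w ij nth_eq_iff_index_eq by fastforce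
      ultimately show "w ! i < w ! j" by simp
    qed
    then show "w = sl ?S" using strict_sorted_equal[OF sl_strict, of w ?S] w fS by simp
  qed
qed

lemma Phi_smono: assumes p: "s permutes {1..n}" and av: "avoids231 n s"
  shows "smono n (desc_tops n s) (desc_bots n s) (Phi n s)"
proof -
  have pe: "pe n s" unfolding pe_def using p by (rule permutes_imp_bij)
  let ?T = "desc_tops n s" and ?B = "desc_bots n s"
  have img: "s ` {1..n} = {1..n}" using p by (rule permutes_image)
  have nt: "nondesc_tops n s = {1..n} - ?T" unfolding nondesc_tops_def img ..
  have nb: "nondesc_bots n s = {1..n} - ?B" unfolding nondesc_bots_def img ..
  let ?xs = "sl ?T" and ?ys = "sl ({1..n} - ?T)" and ?us = "sl ?B" and ?vs = "sl ({1..n} - ?B)"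
  have T: "?T \<subseteq> {1..n}" and B: "?B \<subseteq> {1..n}" using tops_sub[OF pe] bots_sub[OF pe] .
  have c: "card ?T = card ?B" using card_tops[OF pe] card_bots[OF pe] by simp
  have fT: "finite ?T" using finite_subset[OF T] by simp
  have fB: "finite ?B" using finite_subset[OF B] by simp
  have cc: "card ({1..n} - ?T) = card ({1..n} - ?B)" using c T B fT fB by (simp add: card_Diff_subset)
  have l1: "length ?xs = length ?us" using c fT fB by simp
  have l2: "length ?ys = length ?vs" using cc by simp
  have ph: "Phi n s = (\<lambda>b. case (map_of (zip ?ys ?vs) ++ map_of (zip ?xs ?us)) b of Some a \<Rightarrow> a | None \<Rightarrow> b)"
    unfolding Phi_def Let_def fprime[OF av] gprime[OF av] nt nb using l1 by simp
  show ?thesis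
  proof (rule smono_of_lists[OF T B c])
    fix k assume k: "k < card ?T"
    have "map_of (zip ?xs ?us) (?xs ! k) = Some (?us ! k)"
      by (rule map_of_zip_nth[OF l1]) (use k c fB in auto)
    then show "Phi n s (?xs ! k) = ?us ! k" unfolding ph by simp
  next
    fix k assume k: "k < card ({1..n} - ?T)"
    have "?ys ! k \<in> {1..n} - ?T" using sl_nth_in[of "{1..n} - ?T" k] k by simp
    then have "?ys ! k \<notin> set ?xs" using fT by simp
    then have n1: "map_of (zip ?xs ?us) (?ys ! k) = None" using l1 by simp
    have "map_of (zip ?ys ?vs) (?ys ! k) = Some (?vs ! k)"
      by (rule map_of_zip_nth[OF l2]) (use k cc in auto)
    then show "Phi n s (?ys ! k) = ?vs ! k" unfolding ph using n1 by (simp add: map_add_def)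
  next
    fix x assume x: "x \<notin> {1..n}"
    have s1: "set ?xs = ?T" using fT by simp
    have s2: "set ?ys = {1..n} - ?T" by simp
    have n1: "x \<notin> set ?xs" "x \<notin> set ?ys" unfolding s1 s2 using T x by blast+
    have "map_of (zip ?xs ?us) x = None" by (subst map_of_zip_is_None[OF l1]) (rule n1(1))
    moreover have "map_of (zip ?ys ?vs) x = None" by (subst map_of_zip_is_None[OF l2]) (rule n1(2))
    ultimately show "Phi n s x = x" unfolding ph by (simp add: map_add_def)
  qed
qed


definition ins :: "nat \<Rightarrow> nat \<Rightarrow> (nat \<Rightarrow> nat) \<Rightarrow> nat \<Rightarrow> nat" where
  "ins p N s = (\<lambda>i. if i < p then s i else if i = p then N else s (i - 1))"
definition del :: "nat \<Rightarrow> (nat \<Rightarrow> nat) \<Rightarrow> nat \<Rightarrow> nat" where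
  "del p s = (\<lambda>i. if i < p then s i else s (Suc i))"

lemma ins_del: "s p = N \<Longrightarrow> ins p N (del p s) = s"
  unfolding ins_def del_def by (auto simp: fun_eq_iff)

lemma pe_del: assumes pe: "pe (Suc n) s" and p: "p \<in> {1..Suc n}" "s p = Suc n"
  shows "pe n (del p s)"
proof -
  have inj: "inj_on (del p s) {1..n}"
  proof (rule inj_onI)
    fix a b assume a: "a \<in> {1..n}" and b: "b \<in> {1..n}" and e: "del p s a = del p s b"
    let ?a = "if a < p then a else Suc a" and ?b = "if b < p then b else Suc b"
    have "s ?a = s ?b" using e unfolding del_def by (auto split: if_splits)
    moreover have "?a \<in> {1..Suc n}" "?b \<in> {1..Suc n}" using a b by auto
    ultimately have "?a = ?b" using pe_eq[OF pe] by blast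
    then show "a = b" by (auto split: if_splits)
  qed
  have sub: "del p s ` {1..n} \<subseteq> {1..n}"
  proof
    fix y assume "y \<in> del p s ` {1..n}"
    then obtain a where a: "a \<in> {1..n}" "y = del p s a" by blast
    let ?a = "if a < p then a else Suc a"
    have y: "y = s ?a" using a unfolding del_def by auto
    have ar: "?a \<in> {1..Suc n}" "?a \<noteq> p" using a by auto
    then have "s ?a \<in> {1..Suc n}" "s ?a \<noteq> Suc n" using pe_range[OF pe] pe_eq[OF pe ar(1) p(1)] p by auto
    then show "y \<in> {1..n}" using y by auto
  qed
  have "card (del p s ` {1..n}) = card {1..n}" using inj by (simp add: card_image)
  then have "del p s ` {1..n} = {1..n}" using sub by (intro card_subset_eq) auto
  then show ?thesis unfolding pe_def bij_betw_def using inj by simp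
qed

lemma pe_ins: assumes pe: "pe n s" and p: "p \<in> {1..Suc n}"
  shows "pe (Suc n) (ins p (Suc n) s)"
proof -
  let ?t = "ins p (Suc n) s"
  have sub: "?t ` {1..Suc n} \<subseteq> {1..Suc n}"
  proof
    fix y assume "y \<in> ?t ` {1..Suc n}"
    then obtain a where a: "a \<in> {1..Suc n}" "y = ?t a" by blast
    show "y \<in> {1..Suc n}"
    proof (cases "a < p")
      case True then show ?thesis using a pe_range[OF pe, of a] p unfolding ins_def by auto
    next
      case False
      show ?thesis
      proof (cases "a = p")
        case True then show ?thesis unfolding ins_def a(2) by simp
      next
        case F2: False
        then have "a - 1 \<in> {1..n}" using a False p by auto
        then show ?thesis using a pe_range[OF pe, of "a - 1"] False F2 unfolding ins_def by auto
      qed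
    qed
  qed
  have sup: "{1..Suc n} \<subseteq> ?t ` {1..Suc n}"
  proof
    fix y assume y: "y \<in> {1..Suc n}"
    show "y \<in> ?t ` {1..Suc n}"
    proof (cases "y = Suc n")
      case True then show ?thesis using p unfolding ins_def by (auto intro!: image_eqI[of _ _ p])
    next
      case False
      then obtain a where a: "a \<in> {1..n}" "s a = y" using pe_surj[OF pe, of y] y by auto
      show ?thesis
      proof (cases "a < p")
        case True then show ?thesis using a unfolding ins_def by (auto intro!: image_eqI[of _ _ a])
      next
        case False then show ?thesis using a unfolding ins_def by (auto intro!: image_eqI[of _ _ "Suc a"])
      qed
    qed
  qed
  have img: "?t ` {1..Suc n} = {1..Suc n}" using sub sup by blast
  have "inj_on ?t {1..Suc n}" by (rule eq_card_imp_inj_on) (use img in auto)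
  then show ?thesis unfolding pe_def bij_betw_def using img by simp
qed

lemma Dset_ins: assumes p: "1 \<le> p" "p \<le> Suc n" and rng: "\<And>i. i \<in> {1..n} \<Longrightarrow> s i < Suc n"
  shows "Dset (Suc n) (ins p (Suc n) s) =
     {i\<in>Dset n s. Suc i < p} \<union> (if p \<le> n then {p} else {}) \<union> Suc ` {i\<in>Dset n s. p \<le> i}"
proof (intro equalityI subsetI)
  fix i assume i: "i \<in> Dset (Suc n) (ins p (Suc n) s)"
  then have i1: "1 \<le> i" "i < Suc n" "ins p (Suc n) s (Suc i) < ins p (Suc n) s i" unfolding Dset_def by auto
  consider "Suc i < p" | "Suc i = p" | "i = p" | "p < i" by linarith
  then show "i \<in> {i\<in>Dset n s. Suc i < p} \<union> (if p \<le> n then {p} else {}) \<union> Suc ` {i\<in>Dset n s. p \<le> i}"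
  proof cases
    case 1 then show ?thesis using i1 p unfolding ins_def Dset_def by auto
  next
    case 2 then show ?thesis using i1 rng[of i] unfolding ins_def Dset_def by auto
  next
    case 3 then show ?thesis using i1 by auto
  next
    case 4
    then have "i - 1 \<in> {i\<in>Dset n s. p \<le> i}" using i1 p unfolding ins_def Dset_def by auto
    then show ?thesis using 4 by (auto intro!: image_eqI[of _ _ "i - 1"])
  qed
next
  fix i assume "i \<in> {i\<in>Dset n s. Suc i < p} \<union> (if p \<le> n then {p} else {}) \<union> Suc ` {i\<in>Dset n s. p \<le> i}"
  then consider "i \<in> Dset n s" "Suc i < p" | "p \<le> n" "i = p" | k where "k \<in> Dset n s" "p \<le> k" "i = Suc k"
    by (auto split: if_splits)
  then show "i \<in> Dset (Suc n) (ins p (Suc n) s)"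
  proof cases
    case 1 then show ?thesis unfolding ins_def Dset_def by auto
  next
    case 2 then show ?thesis using p rng[of p] unfolding ins_def Dset_def by auto
  next
    case 3 then show ?thesis unfolding ins_def Dset_def by auto
  qed
qed

lemma tops_bots_ins:
  assumes p: "1 \<le> p" "p \<le> Suc n" and rng: "\<And>i. i \<in> {1..n} \<Longrightarrow> s i < Suc n"
    and cl: "2 \<le> p \<Longrightarrow> p \<le> n \<Longrightarrow> s (p - 1) < s p"
  shows "desc_tops (Suc n) (ins p (Suc n) s) = desc_tops n s \<union> (if p \<le> n then {Suc n} else {})"
    and "desc_bots (Suc n) (ins p (Suc n) s) = desc_bots n s \<union> (if p \<le> n then {s p} else {})"
proof -
  let ?t = "ins p (Suc n) s"
  have D: "Dset n s = {i\<in>Dset n s. Suc i < p} \<union> {i\<in>Dset n s. p \<le> i}"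
  proof -
    have "p - 1 \<notin> Dset n s" using cl p unfolding Dset_def by (cases "2 \<le> p"; cases "p \<le> n") auto
    moreover have "i = p - 1" if "\<not> Suc i < p" "\<not> p \<le> i" for i using that by simp
    ultimately show ?thesis by blast
  qed
  have e1: "?t ` {i\<in>Dset n s. Suc i < p} = s ` {i\<in>Dset n s. Suc i < p}"
    by (rule image_cong) (auto simp: ins_def)
  have e2: "?t ` Suc ` {i\<in>Dset n s. p \<le> i} = s ` {i\<in>Dset n s. p \<le> i}"
    unfolding image_image by (rule image_cong) (auto simp: ins_def)
  have e3: "?t ` Suc ` {i\<in>Dset n s. Suc i < p} = s ` Suc ` {i\<in>Dset n s. Suc i < p}"
    unfolding image_image by (rule image_cong) (auto simp: ins_def)
  have e4: "?t ` Suc ` Suc ` {i\<in>Dset n s. p \<le> i} = s ` Suc ` {i\<in>Dset n s. p \<le> i}"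
    unfolding image_image by (rule image_cong) (auto simp: ins_def)
  have e5: "?t ` (if p \<le> n then {p} else {}) = (if p \<le> n then {Suc n} else {})" unfolding ins_def by auto
  have e6: "?t ` Suc ` (if p \<le> n then {p} else {}) = (if p \<le> n then {s p} else {})" unfolding ins_def by auto
  show "desc_tops (Suc n) ?t = desc_tops n s \<union> (if p \<le> n then {Suc n} else {})"
  proof -
    have a: "s ` Dset n s = s ` {i\<in>Dset n s. Suc i < p} \<union> s ` {i\<in>Dset n s. p \<le> i}" using D by (metis Set.image_Un)
    have "desc_tops (Suc n) ?t = s ` {i\<in>Dset n s. Suc i < p} \<union> (if p \<le> n then {Suc n} else {}) \<union> s ` {i\<in>Dset n s. p \<le> i}"
    proof -
      have X: "Dset (Suc n) ?t = {i\<in>Dset n s. Suc i < p} \<union> (if p \<le> n then {p} else {}) \<union> Suc ` {i\<in>Dset n s. p \<le> i}"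
        by (rule Dset_ins[OF p rng])
      have "desc_tops (Suc n) ?t = ?t ` {i\<in>Dset n s. Suc i < p} \<union> ?t ` (if p \<le> n then {p} else {}) \<union> ?t ` Suc ` {i\<in>Dset n s. p \<le> i}"
        unfolding tops_eq X Set.image_Un ..
      also have "\<dots> = s ` {i\<in>Dset n s. Suc i < p} \<union> (if p \<le> n then {Suc n} else {}) \<union> s ` {i\<in>Dset n s. p \<le> i}"
        unfolding e1 e2 e5 ..
      finally show ?thesis .
    qed
    also have "\<dots> = desc_tops n s \<union> (if p \<le> n then {Suc n} else {})" unfolding tops_eq a by (simp only: Un_ac)
    finally show ?thesis .
  qed
  show "desc_bots (Suc n) ?t = desc_bots n s \<union> (if p \<le> n then {s p} else {})"
  proof -
    have a: "s ` Suc ` Dset n s = s ` Suc ` {i\<in>Dset n s. Suc i < p} \<union> s ` Suc ` {i\<in>Dset n s. p \<le> i}" using D by (metis Set.image_Un)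
    have "desc_bots (Suc n) ?t = s ` Suc ` {i\<in>Dset n s. Suc i < p} \<union> (if p \<le> n then {s p} else {}) \<union> s ` Suc ` {i\<in>Dset n s. p \<le> i}"
    proof -
      have X: "Dset (Suc n) ?t = {i\<in>Dset n s. Suc i < p} \<union> (if p \<le> n then {p} else {}) \<union> Suc ` {i\<in>Dset n s. p \<le> i}"
        by (rule Dset_ins[OF p rng])
      have "desc_bots (Suc n) ?t = ?t ` Suc ` {i\<in>Dset n s. Suc i < p} \<union> ?t ` Suc ` (if p \<le> n then {p} else {}) \<union> ?t ` Suc ` Suc ` {i\<in>Dset n s. p \<le> i}"
        unfolding bots_eq X Set.image_Un ..
      also have "\<dots> = s ` Suc ` {i\<in>Dset n s. Suc i < p} \<union> (if p \<le> n then {s p} else {}) \<union> s ` Suc ` {i\<in>Dset n s. p \<le> i}"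
        unfolding e3 e4 e6 ..
      finally show ?thesis .
    qed
    also have "\<dots> = desc_bots n s \<union> (if p \<le> n then {s p} else {})" unfolding bots_eq a by (simp only: Un_ac)
    finally show ?thesis .
  qed
qed


lemma av_del: assumes av: "avoids231 (Suc n) s" shows "avoids231 n (del p s)"
  unfolding avoids231_def
proof clarify
  fix i j k assume h: "1 \<le> i" "i < j" "j < k" "k \<le> n" "del p s k < del p s i" "del p s i < del p s j"
  let ?f = "\<lambda>x. if x < p then x else Suc x"
  have "del p s x = s (?f x)" for x unfolding del_def by simp
  moreover have "1 \<le> ?f i" "?f i < ?f j" "?f j < ?f k" "?f k \<le> Suc n" using h by auto
  ultimately show False using no231[OF av, of "?f i" "?f j" "?f k"] h by auto
qed

lemma av_ins: assumes av: "avoids231 n s" and p: "1 \<le> p" "p \<le> Suc n"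
  and cl: "\<And>i k. 1 \<le> i \<Longrightarrow> i < p \<Longrightarrow> p \<le> k \<Longrightarrow> k \<le> n \<Longrightarrow> s i < s k"
  and rng: "\<And>i. i \<in> {1..n} \<Longrightarrow> s i < Suc n"
  shows "avoids231 (Suc n) (ins p (Suc n) s)"
  unfolding avoids231_def
proof clarify
  let ?t = "ins p (Suc n) s"
  fix i j k assume h: "1 \<le> i" "i < j" "j < k" "k \<le> Suc n" "?t k < ?t i" "?t i < ?t j"
  let ?g = "\<lambda>x. if x < p then x else x - 1"
  have tg: "x \<noteq> p \<Longrightarrow> ?t x = s (?g x)" for x unfolding ins_def by simp
  have tr: "?t x < Suc n" if "x \<in> {1..Suc n}" "x \<noteq> p" for x
  proof (cases "x < p")
    case True then show ?thesis using rng[of x] that p unfolding ins_def by auto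
  next
    case False
    then have "x - 1 \<in> {1..n}" using that p by auto
    then show ?thesis using rng[of "x - 1"] False that unfolding ins_def by auto
  qed
  have tp: "?t p = Suc n" unfolding ins_def by simp
  consider "k = p" | "i = p" | "j = p" | "i \<noteq> p" "j \<noteq> p" "k \<noteq> p" by blast
  then show False
  proof cases
    case 1 then show ?thesis using h tp tr[of i] by auto
  next
    case 2 then show ?thesis using h tp tr[of j] by auto
  next
    case 3
    then have "?t i = s i" "?t k = s (k - 1)" using h unfolding ins_def by auto
    moreover have "s i < s (k - 1)" using cl[of i "k - 1"] h 3 by auto
    ultimately show ?thesis using h by simp
  next
    case 4
    have "1 \<le> ?g i" "?g i < ?g j" "?g j < ?g k" "?g k \<le> n" using h 4 p by auto
    then show ?thesis using no231[OF av, of "?g i" "?g j" "?g k"] h tg 4 by auto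
  qed
qed

definition cnt :: "nat set \<Rightarrow> nat \<Rightarrow> nat" where "cnt S x = card {y\<in>S. y \<le> x}"

lemma cnt_Suc: assumes "finite S" shows "cnt S (Suc x) = cnt S x + (if Suc x \<in> S then 1 else 0)"
proof -
  have "{y\<in>S. y \<le> Suc x} = {y\<in>S. y \<le> x} \<union> (if Suc x \<in> S then {Suc x} else {})" by (auto simp: le_Suc_eq)
  moreover have "finite {y\<in>S. y \<le> x}" using assms by simp
  ultimately show ?thesis unfolding cnt_def by (auto simp: card_Un_disjoint)
qed

lemma cnt_0: "0 \<notin> S \<Longrightarrow> cnt S 0 = 0"
  unfolding cnt_def by (auto intro: Nat.le0 simp: card_eq_0_iff)

lemma cnt_rem: assumes "finite S" shows "cnt (S - {a}) x = cnt S x - (if a \<in> S \<and> a \<le> x then 1 else 0)"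
proof -
  have "{y\<in>S - {a}. y \<le> x} = {y\<in>S. y \<le> x} - {a}" by auto
  then show ?thesis unfolding cnt_def using assms by (auto simp: card_Diff_singleton_if)
qed

lemma cnt_rem_gt: "a > x \<Longrightarrow> cnt (S - {a}) x = cnt S x"
proof -
  assume "a > x"
  then have "{y\<in>S - {a}. y \<le> x} = {y\<in>S. y \<le> x}" by auto
  then show ?thesis unfolding cnt_def by simp
qed

lemma cnt_pos: "finite S \<Longrightarrow> a \<in> S \<Longrightarrow> a \<le> x \<Longrightarrow> cnt S x \<ge> 1"
  unfolding cnt_def using card_gt_0_iff[of "{y\<in>S. y \<le> x}"] by auto

lemma lemH': "pe n s \<Longrightarrow> cnt (desc_bots n s) x = cnt (desc_tops n s) x + strd n s x"
  unfolding cnt_def by (rule lemH)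

lemma finite_tops[simp]: "finite (desc_tops n s)" unfolding tops_eq by simp
lemma finite_bots[simp]: "finite (desc_bots n s)" unfolding bots_eq by simp


context
  fixes n s p
  assumes pe: "pe (Suc n) s" and av: "avoids231 (Suc n) s" and sp: "s p = Suc n" and p1: "1 \<le> p" and pn: "p \<le> n"
begin

lemma P_pr: "p \<in> {1..Suc n}" using p1 pn by auto

lemma P_closed: assumes "1 \<le> i" "i < p" "p < k" "k \<le> Suc n" shows "s i < s k"
proof -
  have ir: "i \<in> {1..Suc n}" and kr: "k \<in> {1..Suc n}" using assms by auto
  have "s i \<noteq> s p" "s k \<noteq> s i" using pe_eq[OF pe ir P_pr] pe_eq[OF pe kr ir] assms by auto
  then have "s i < s p" using pe_range[OF pe ir] sp by auto
  then show ?thesis using no231[OF av, of i p k] assms \<open>s k \<noteq> s i\<close> by (meson linorder_neqE_nat)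
qed

lemma P_small: assumes i: "i \<in> {1..<p}" shows "s i < p"
proof -
  have ir: "i \<in> {1..Suc n}" using i pn by auto
  have sub: "{1..<s i} \<subseteq> s ` ({1..<p} - {i})"
  proof
    fix v assume v: "v \<in> {1..<s i}"
    then have "v \<in> {1..Suc n}" using pe_range[OF pe ir] by auto
    then obtain k where k: "k \<in> {1..Suc n}" "s k = v" using pe_surj[OF pe] by blast
    have "k \<noteq> i" using k v by auto
    moreover have "k \<noteq> p" using k v sp pe_range[OF pe ir] by auto
    moreover have "\<not> p < k" using P_closed[of i k] i k v by auto
    ultimately show "v \<in> s ` ({1..<p} - {i})" using k by auto
  qed
  have "card {1..<s i} \<le> card (s ` ({1..<p} - {i}))" by (rule card_mono[OF _ sub]) simp
  also have "\<dots> = card ({1..<p} - {i})" by (rule card_img_pe[OF pe]) (use pn in auto)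
  also have "\<dots> = p - 2" using i by simp
  finally have "s i - 1 \<le> p - 2" by simp
  then show ?thesis using i by auto
qed

lemma P_prefix: "s ` {1..<p} = {1..<p}"
proof -
  have sub: "s ` {1..<p} \<subseteq> {1..<p}" using P_small pe_range[OF pe] pn by fastforce
  have "card (s ` {1..<p}) = card {1..<p}" by (rule card_img_pe[OF pe]) (use pn in auto)
  then show ?thesis using sub by (intro card_subset_eq) auto
qed

lemma P1a: "strd (Suc n) s (p - 1) = 0"
proof -
  have "{i \<in> Dset (Suc n) s. s (Suc i) \<le> p - 1 \<and> p - 1 < s i} = {}"
  proof (rule ccontr)
    assume "{i \<in> Dset (Suc n) s. s (Suc i) \<le> p - 1 \<and> p - 1 < s i} \<noteq> {}"
    then obtain i where i: "i \<in> Dset (Suc n) s" "s (Suc i) \<le> p - 1" "p - 1 < s i" by blast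
    have ir: "1 \<le> i" "i < Suc n" using i unfolding Dset_def by auto
    show False
    proof (cases "i < p")
      case True then show ?thesis using P_small[of i] ir i by auto
    next
      case False
      have sr: "Suc i \<in> {1..Suc n}" using ir by auto
      have "s (Suc i) \<in> {1..Suc n}" using pe_range[OF pe sr] .
      then have "s (Suc i) \<in> {1..<p}" using i p1 by auto
      then obtain k where k: "k \<in> {1..<p}" "s k = s (Suc i)" using P_prefix by (metis imageE)
      then have "k = Suc i" using pe_eq[OF pe _ sr, of k] pn by auto
      then show False using k False by auto
    qed
  qed
  then show ?thesis unfolding strd_def by simp
qed

lemma P1b: assumes x: "p \<le> x" "x \<le> n" shows "strd (Suc n) s x > 0"
proof -
  have "\<not> {1..x} \<subseteq> s ` {1..<p}"
  proof
    assume "{1..x} \<subseteq> s ` {1..<p}"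
    then have "card {1..x} \<le> card (s ` {1..<p})" by (intro card_mono) auto
    also have "\<dots> = p - 1"
    proof -
      have "{1..<p} \<subseteq> {1..Suc n}" using pn by auto
      then show ?thesis using card_img_pe[OF pe, of "{1..<p}"] by simp
    qed
    finally show False using x p1 by simp
  qed
  then obtain v where v: "v \<in> {1..x}" "v \<notin> s ` {1..<p}" by blast
  then have "v \<in> {1..Suc n}" using x by auto
  then obtain k where k: "k \<in> {1..Suc n}" "s k = v" using pe_surj[OF pe] by blast
  have "k \<noteq> p" using k v sp x by auto
  moreover have "\<not> k < p" using k v by auto
  ultimately have "p < k" by simp
  then show ?thesis using walkD[of p k "Suc n" x s] p1 k v sp x by auto
qed

end

lemma lemG: assumes pe: "pe n s" and av: "avoids231 n s" and j: "j < n" and z: "strd n s j = 0"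
  shows "j < s (Suc j)" "strd n s (s (Suc j)) = 0" "\<And>x. j < x \<Longrightarrow> x < s (Suc j) \<Longrightarrow> strd n s x > 0"
proof -
  let ?g = "s (Suc j)"
  have pre: "s ` {1..j} = {1..j}" using lemZ[OF pe _ z] j by simp
  have lo: "i \<in> {1..j} \<Longrightarrow> s i \<le> j" for i using pre by auto
  have hi: "k \<in> {1..n} \<Longrightarrow> s k \<le> j \<Longrightarrow> k \<le> j" for k using lemZ'[OF pe _ z] j by simp
  have sj: "Suc j \<in> {1..n}" using j by auto
  show gj: "j < ?g"
  proof (rule ccontr)
    assume "\<not> j < ?g"
    then have "?g \<le> j" by simp
    then show False using hi[OF sj] by simp
  qed
  show "strd n s ?g = 0"
  proof -
    have "{i \<in> Dset n s. s (Suc i) \<le> ?g \<and> ?g < s i} = {}"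
    proof (rule ccontr)
      assume "{i \<in> Dset n s. s (Suc i) \<le> ?g \<and> ?g < s i} \<noteq> {}"
      then obtain i where i: "i \<in> Dset n s" "s (Suc i) \<le> ?g" "?g < s i" by blast
      have ir: "1 \<le> i" "i < n" using i unfolding Dset_def by auto
      have "\<not> i \<le> j" using lo[of i] ir i gj by auto
      moreover have "i \<noteq> Suc j" using i by auto
      ultimately have ij: "Suc j < i" by simp
      have "s (Suc i) \<noteq> ?g" using pe_eq[OF pe _ sj, of "Suc i"] ir ij by auto
      then show False using no231[OF av, of "Suc j" i "Suc i"] ij ir i by auto
    qed
    then show ?thesis unfolding strd_def by simp
  qed
  show "strd n s x > 0" if x: "j < x" "x < ?g" for x
  proof -
    have "x \<in> {1..n}" using x pe_range[OF pe sj] by auto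
    then obtain k where k: "k \<in> {1..n}" "s k = x" using pe_surj[OF pe] by blast
    have "\<not> k \<le> j" using lo[of k] k x by auto
    moreover have "k \<noteq> Suc j" using k x by auto
    ultimately have "Suc j < k" by simp
    then show ?thesis using walkD[of "Suc j" k n x s] k x by auto
  qed
qed

definition goodf :: "nat \<Rightarrow> nat set \<Rightarrow> nat set \<Rightarrow> nat \<Rightarrow> bool" where
  "goodf N T B f \<longleftrightarrow> f \<in> B \<and> f < N \<and> cnt B f = cnt T f + 1 \<and>
     (\<forall>x. f \<le> x \<and> Suc x < N \<longrightarrow> cnt T x + (if Suc x \<in> T then 1 else 0) + 1 \<le> cnt B x)"

lemma goodf_unique_aux: assumes fT: "finite T" and fB: "finite B"
  and g1: "goodf N T B f1" and g2: "goodf N T B f2" shows "\<not> f1 < f2"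
proof
  assume lt: "f1 < f2"
  let ?x = "f2 - 1"
  have x: "Suc ?x = f2" using lt by simp
  have "cnt T ?x + (if Suc ?x \<in> T then 1 else 0) + 1 \<le> cnt B ?x"
  proof -
    have "f1 \<le> ?x" "Suc ?x < N" using lt x g2 unfolding goodf_def by auto
    then show ?thesis using g1 unfolding goodf_def by blast
  qed
  moreover have "cnt B f2 = cnt B ?x + 1" using cnt_Suc[OF fB, of ?x] x g2 unfolding goodf_def by simp
  moreover have "cnt T f2 = cnt T ?x + (if Suc ?x \<in> T then 1 else 0)" using cnt_Suc[OF fT, of ?x] x by simp
  ultimately show False using g2 unfolding goodf_def by simp
qed

lemma goodf_unique: "finite T \<Longrightarrow> finite B \<Longrightarrow> goodf N T B f1 \<Longrightarrow> goodf N T B f2 \<Longrightarrow> f1 = f2"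
  using goodf_unique_aux by (meson linorder_neqE_nat)


lemma decomp_cl: assumes pe: "pe (Suc n) s" and av: "avoids231 (Suc n) s" and sp: "s p = Suc n"
  and p: "p \<in> {1..Suc n}"
  shows "\<And>i k. 1 \<le> i \<Longrightarrow> i < p \<Longrightarrow> p \<le> k \<Longrightarrow> k \<le> n \<Longrightarrow> del p s i < del p s k"
proof -
  fix i k assume h: "1 \<le> i" "i < p" "p \<le> k" "k \<le> n"
  then have "p \<le> n" by simp
  then have "s i < s (Suc k)" using P_closed[OF pe av sp _ \<open>p \<le> n\<close>, of i "Suc k"] h p by auto
  then show "del p s i < del p s k" using h unfolding del_def by auto
qed

lemma decomp: assumes pe: "pe (Suc n) s" and av: "avoids231 (Suc n) s" and sp: "s p = Suc n"
  and p: "p \<in> {1..Suc n}"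
  shows "pe n (del p s)" "avoids231 n (del p s)" "ins p (Suc n) (del p s) = s"
    "desc_tops (Suc n) s = desc_tops n (del p s) \<union> (if p \<le> n then {Suc n} else {})"
    "desc_bots (Suc n) s = desc_bots n (del p s) \<union> (if p \<le> n then {del p s p} else {})"
proof -
  let ?s = "del p s"
  show pe': "pe n ?s" by (rule pe_del[OF pe p sp])
  show "avoids231 n ?s" by (rule av_del[OF av])
  show e: "ins p (Suc n) ?s = s" by (rule ins_del[of s p "Suc n", OF sp])
  have rng: "\<And>i. i \<in> {1..n} \<Longrightarrow> ?s i < Suc n" using pe_range[OF pe'] by fastforce
  have cl: "?s (p - 1) < ?s p" if "2 \<le> p" "p \<le> n"
    using decomp_cl[OF pe av sp p, of "p - 1" p] that by auto
  have p1: "1 \<le> p" "p \<le> Suc n" using p by auto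
  show "desc_tops (Suc n) s = desc_tops n ?s \<union> (if p \<le> n then {Suc n} else {})"
    using tops_bots_ins(1)[OF p1 rng cl] e by simp
  show "desc_bots (Suc n) s = desc_bots n ?s \<union> (if p \<le> n then {?s p} else {})"
    using tops_bots_ins(2)[OF p1 rng cl] e by simp
qed

lemma not_bot_p: assumes pe: "pe n s" and p: "1 \<le> p" "p \<le> n"
  and cl: "2 \<le> p \<Longrightarrow> s (p - 1) < s p" shows "s p \<notin> desc_bots n s"
proof
  assume "s p \<in> desc_bots n s"
  then obtain i where i: "i \<in> Dset n s" "s (Suc i) = s p" unfolding bots_eq by auto
  have "Suc i \<in> {1..n}" using i unfolding Dset_def by auto
  then have "Suc i = p" using pe_eq[OF pe _ , of "Suc i" p] i p by auto
  then show False using i cl unfolding Dset_def by auto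
qed

lemma goodf_of: assumes pe: "pe (Suc n) s" and av: "avoids231 (Suc n) s" and sp: "s p = Suc n"
  and p: "1 \<le> p" "p \<le> n"
  shows "goodf (Suc n) (desc_tops (Suc n) s) (desc_bots (Suc n) s) (s (Suc p))"
    "desc_tops n (del p s) = desc_tops (Suc n) s - {Suc n}"
    "desc_bots n (del p s) = desc_bots (Suc n) s - {s (Suc p)}"
proof -
  let ?s = "del p s" and ?T = "desc_tops (Suc n) s" and ?B = "desc_bots (Suc n) s" and ?f = "s (Suc p)"
  have pr: "p \<in> {1..Suc n}" using p by auto
  note d = decomp[OF pe av sp pr]
  have fp: "?s p = ?f" unfolding del_def by simp
  have T: "?T = desc_tops n ?s \<union> {Suc n}" using d(4) p by simp
  have B: "?B = desc_bots n ?s \<union> {?f}" using d(5) p fp by simp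
  have nT: "Suc n \<notin> desc_tops n ?s" using tops_sub[OF d(1)] by auto
  have cl: "?s (p - 1) < ?s p" if "2 \<le> p" using decomp_cl[OF pe av sp pr, of "p - 1" p] that p by auto
  have nB: "?f \<notin> desc_bots n ?s" using not_bot_p[OF d(1) p cl] fp by simp
  show T': "desc_tops n ?s = ?T - {Suc n}" using T nT by auto
  show B': "desc_bots n ?s = ?B - {?f}" using B nB by auto
  have fB: "?f \<in> ?B" using B by simp
  have fr: "?f \<in> {1..n}" using pe_range[OF d(1), of p] fp p by auto
  have spr: "Suc p \<in> {1..Suc n}" using p by auto
  have st: "strd (Suc n) s ?f = 1"
  proof -
    have "{i \<in> Dset (Suc n) s. s (Suc i) \<le> ?f \<and> ?f < s i} = {p}"
    proof (intro equalityI subsetI)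
      fix i assume i: "i \<in> {i \<in> Dset (Suc n) s. s (Suc i) \<le> ?f \<and> ?f < s i}"
      have ir: "1 \<le> i" "i < Suc n" using i unfolding Dset_def by auto
      show "i \<in> {p}"
      proof (rule ccontr)
        assume "i \<notin> {p}"
        then have ip: "i \<noteq> p" by simp
        have "s (Suc i) \<noteq> ?f" using pe_eq[OF pe _ spr, of "Suc i"] ir ip by auto
        then have lt: "s (Suc i) < ?f" "?f < s i" using i by auto
        consider "i < p" | "i = Suc p" | "Suc p < i" using ip by linarith
        then show False
        proof cases
          case 1
          have "s i < s (Suc p)" by (rule P_closed[OF pe av sp p(1) p(2)]) (use 1 ir p in auto)
          then show ?thesis using lt by simp
        next
          case 2 then show ?thesis using lt by simp
        next
          case 3 then show ?thesis using no231[OF av, of "Suc p" i "Suc i"] ir lt by auto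
        qed
      qed
    next
      fix i assume "i \<in> {p}"
      then show "i \<in> {i \<in> Dset (Suc n) s. s (Suc i) \<le> ?f \<and> ?f < s i}"
        using p sp fr unfolding Dset_def by auto
    qed
    then show ?thesis unfolding strd_def by simp
  qed
  have c1: "cnt ?B ?f = cnt ?T ?f + 1" using lemH'[OF pe, of ?f] st by simp
  have c2: "cnt ?T x + (if Suc x \<in> ?T then 1 else 0) + 1 \<le> cnt ?B x" if x: "?f \<le> x" "Suc x < Suc n" for x
  proof -
    have v: "card {t\<in>desc_tops n ?s. t \<le> Suc x} \<le> card {b\<in>desc_bots n ?s. b < Suc x}"
      using valid_perm[OF d(1)] unfolding Valid_def by blast
    have "card {t\<in>desc_tops n ?s. t \<le> Suc x} = cnt ?T (Suc x)"
      unfolding T' using cnt_rem_gt[of "Suc x" "Suc n" ?T] x unfolding cnt_def by simp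
    also have "\<dots> = cnt ?T x + (if Suc x \<in> ?T then 1 else 0)" by (rule cnt_Suc) simp
    finally have a: "card {t\<in>desc_tops n ?s. t \<le> Suc x} = cnt ?T x + (if Suc x \<in> ?T then 1 else 0)" .
    have "{b\<in>desc_bots n ?s. b < Suc x} = {b\<in>desc_bots n ?s. b \<le> x}" by auto
    then have "card {b\<in>desc_bots n ?s. b < Suc x} = cnt (?B - {?f}) x" unfolding B' cnt_def by simp
    also have "\<dots> = cnt ?B x - 1" using cnt_rem[of ?B ?f x] fB x by simp
    finally have b: "card {b\<in>desc_bots n ?s. b < Suc x} = cnt ?B x - 1" .
    have "cnt ?B x \<ge> 1" by (rule cnt_pos[OF _ fB x(1)]) simp
    then show ?thesis using a b v by linarith
  qed
  show "goodf (Suc n) ?T ?B ?f" unfolding goodf_def using fB fr c1 c2 by auto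
qed


lemma ins_agree: assumes "\<And>i. i \<in> {1..n} \<Longrightarrow> s1 i = s2 i" "1 \<le> p" "p \<le> Suc n" "i \<in> {1..Suc n}"
  shows "ins p N s1 i = ins p N s2 i"
proof -
  consider "i < p" | "i = p" | "p < i" by linarith
  then show ?thesis
  proof cases
    case 1 then show ?thesis using assms unfolding ins_def by auto
  next
    case 2 then show ?thesis unfolding ins_def by auto
  next
    case 3
    then have "i - 1 \<in> {1..n}" using assms by auto
    then show ?thesis using assms 3 unfolding ins_def by auto
  qed
qed

lemma inj231: "pe N s1 \<Longrightarrow> avoids231 N s1 \<Longrightarrow> pe N s2 \<Longrightarrow> avoids231 N s2 \<Longrightarrow>
  desc_tops N s1 = desc_tops N s2 \<Longrightarrow> desc_bots N s1 = desc_bots N s2 \<Longrightarrow> i \<in> {1..N} \<Longrightarrow> s1 i = s2 i"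
proof (induction N arbitrary: s1 s2 i)
  case 0 then show ?case by simp
next
  case (Suc n)
  obtain p1 where p1: "p1 \<in> {1..Suc n}" "s1 p1 = Suc n" using pe_surj[OF Suc.prems(1), of "Suc n"] by auto
  obtain p2 where p2: "p2 \<in> {1..Suc n}" "s2 p2 = Suc n" using pe_surj[OF Suc.prems(3), of "Suc n"] by auto
  note d1 = decomp[OF Suc.prems(1,2) p1(2) p1(1)]
  note d2 = decomp[OF Suc.prems(3,4) p2(2) p2(1)]
  let ?T = "desc_tops (Suc n) s1" and ?B = "desc_bots (Suc n) s1"
  have nt1: "Suc n \<notin> desc_tops n (del p1 s1)" using tops_sub[OF d1(1)] by auto
  have nt2: "Suc n \<notin> desc_tops n (del p2 s2)" using tops_sub[OF d2(1)] by auto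
  have key: "p1 = p2 \<and> desc_tops n (del p1 s1) = desc_tops n (del p2 s2) \<and> desc_bots n (del p1 s1) = desc_bots n (del p2 s2)"
  proof (cases "p1 \<le> n")
    case True
    then have "Suc n \<in> ?T" using d1(4) by simp
    then have p2n: "p2 \<le> n" using d2(4) nt2 Suc.prems(5) by (auto split: if_splits)
    have st: "strd (Suc n) s1 x = strd (Suc n) s2 x" for x
      using lemH'[OF Suc.prems(1), of x] lemH'[OF Suc.prems(3), of x] Suc.prems(5,6) by simp
    have "\<not> p1 < p2"
    proof
      assume "p1 < p2"
      then have "strd (Suc n) s1 (p2 - 1) > 0" using P1b[OF Suc.prems(1,2) p1(2) _ True, of "p2 - 1"] p1 p2n by auto
      moreover have "strd (Suc n) s2 (p2 - 1) = 0" using P1a[OF Suc.prems(3,4) p2(2) _ p2n] p2 by auto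
      ultimately show False using st by simp
    qed
    moreover have "\<not> p2 < p1"
    proof
      assume "p2 < p1"
      then have "strd (Suc n) s2 (p1 - 1) > 0" using P1b[OF Suc.prems(3,4) p2(2) _ p2n, of "p1 - 1"] p2 True by auto
      moreover have "strd (Suc n) s1 (p1 - 1) = 0" using P1a[OF Suc.prems(1,2) p1(2) _ True] p1 by auto
      ultimately show False using st by simp
    qed
    ultimately have pe: "p1 = p2" by simp
    have p11: "1 \<le> p1" using p1 by simp
    note g1 = goodf_of[OF Suc.prems(1,2) p1(2) p11 True]
    note g2 = goodf_of[OF Suc.prems(3,4) p2(2) _ p2n]
    have "s1 (Suc p1) = s2 (Suc p1)"
      using goodf_unique[OF _ _ g1(1)] g2(1) pe p2 Suc.prems(5,6) by simp
    then show ?thesis using g1(2,3) g2(2,3) pe p2 Suc.prems(5,6) by simp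
  next
    case False
    then have p1e: "p1 = Suc n" using p1 by simp
    then have "Suc n \<notin> ?T" using d1(4) nt1 by simp
    then have "\<not> p2 \<le> n" using d2(4) Suc.prems(5) by auto
    then have p2e: "p2 = Suc n" using p2 by simp
    show ?thesis using d1(4,5) d2(4,5) p1e p2e Suc.prems(5,6) by simp
  qed
  have ag: "del p1 s1 j = del p2 s2 j" if "j \<in> {1..n}" for j
    using Suc.IH[OF d1(1,2) d2(1,2)] key that by blast
  have "s1 i = ins p1 (Suc n) (del p1 s1) i" using d1(3) by simp
  also have "\<dots> = ins p1 (Suc n) (del p2 s2) i" by (rule ins_agree[OF ag]) (use p1 Suc.prems(7) in auto)
  also have "\<dots> = s2 i" using d2(3) key by simp
  finally show ?case .
qed


lemma valid_basic: assumes "Valid N T B"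
  shows "finite T" "finite B" "\<And>x. cnt T x \<le> cnt B x" "\<And>x. cnt T (Suc x) \<le> cnt B x"
    "T \<subseteq> {1..N}" "B \<subseteq> {1..N}" "card T = card B" "0 \<notin> T" "0 \<notin> B"
proof -
  have "T \<subseteq> {1..N}" "B \<subseteq> {1..N}" using assms unfolding Valid_def by auto
  then show fT: "finite T" and fB: "finite B" using finite_subset by blast+
  show "T \<subseteq> {1..N}" "B \<subseteq> {1..N}" "card T = card B" "0 \<notin> T" "0 \<notin> B" using assms unfolding Valid_def by auto
  show "cnt T x \<le> cnt B x" for x
  proof -
    have "cnt T x \<le> card {b\<in>B. b < x}" using assms unfolding Valid_def cnt_def by auto
    also have "\<dots> \<le> cnt B x" unfolding cnt_def by (rule card_mono) (use fB in auto)
    finally show ?thesis .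
  qed
  show "cnt T (Suc x) \<le> cnt B x" for x
  proof -
    have "cnt T (Suc x) \<le> card {b\<in>B. b < Suc x}" using assms unfolding Valid_def cnt_def by auto
    also have "{b\<in>B. b < Suc x} = {b\<in>B. b \<le> x}" by auto
    finally show ?thesis unfolding cnt_def .
  qed
qed

lemma valid_top: assumes v: "Valid (Suc n) T B" shows "Suc n \<notin> B"
proof
  assume nb: "Suc n \<in> B"
  note vb = valid_basic[OF v]
  have "{t\<in>T. t \<le> Suc n} = T" using vb(5) by auto
  then have "card T \<le> card {b\<in>B. b < Suc n}" using v unfolding Valid_def by metis
  also have "\<dots> \<le> card (B - {Suc n})" by (rule card_mono) (use vb in auto)
  also have "\<dots> = card B - 1" using nb vb by simp
  moreover have "card B > 0" using nb vb(2) card_gt_0_iff by blast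
  ultimately show False using vb(7) by linarith
qed

lemma exist231: "Valid N T B \<Longrightarrow> \<exists>s. pe N s \<and> avoids231 N s \<and> desc_tops N s = T \<and> desc_bots N s = B"
proof (induction N arbitrary: T B)
  case 0
  have "T = {}" "B = {}" using 0 unfolding Valid_def by auto
  moreover have "pe 0 id" unfolding pe_def by simp
  moreover have "avoids231 0 id" unfolding avoids231_def by simp
  moreover have "desc_tops 0 id = {}" "desc_bots 0 id = {}" unfolding desc_tops_def desc_bots_def by auto
  ultimately show ?case by metis
next
  case (Suc n)
  note vb = valid_basic[OF Suc.prems]
  have nB: "Suc n \<notin> B" by (rule valid_top[OF Suc.prems])
  show ?case
  proof (cases "Suc n \<in> T")
    case False
    have Tn: "T \<subseteq> {1..n}" using vb(5) False by (auto simp: le_Suc_eq)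
    have Bn: "B \<subseteq> {1..n}" using vb(6) nB by (auto simp: le_Suc_eq)
    have v: "Valid n T B" using Suc.prems Tn Bn unfolding Valid_def by blast
    obtain s where s: "pe n s" "avoids231 n s" "desc_tops n s = T" "desc_bots n s = B" using Suc.IH[OF v] by blast
    have rng: "\<And>i. i \<in> {1..n} \<Longrightarrow> s i < Suc n" using pe_range[OF s(1)] by fastforce
    have p: "1 \<le> Suc n" "Suc n \<le> Suc n" by auto
    have cl: "s (Suc n - 1) < s (Suc n)" if "2 \<le> Suc n" "Suc n \<le> n" using that by simp
    have "pe (Suc n) (ins (Suc n) (Suc n) s)" by (rule pe_ins[OF s(1)]) simp
    moreover have "avoids231 (Suc n) (ins (Suc n) (Suc n) s)" by (rule av_ins[OF s(2) p]) (use rng in auto)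
    moreover have "desc_tops (Suc n) (ins (Suc n) (Suc n) s) = T" using tops_bots_ins(1)[OF p rng cl] s by simp
    moreover have "desc_bots (Suc n) (ins (Suc n) (Suc n) s) = B" using tops_bots_ins(2)[OF p rng cl] s by simp
    ultimately show ?thesis by blast
  next
    case True
    let ?cB = "cnt B" and ?cT = "cnt T"
    have fT: "finite T" and fB: "finite B" using vb(1) vb(2) by auto
    have Bn: "B \<subseteq> {1..n}" using vb(6) nB by (auto simp: le_Suc_eq)
    have cn: "?cB n = ?cT n + 1"
    proof -
      have "{b\<in>B. b \<le> n} = B" using Bn by auto
      moreover have "{t\<in>T. t \<le> n} = T - {Suc n}" using vb(5) by (auto simp: le_Suc_eq)
      moreover have "card T \<ge> 1" using True fT card_gt_0_iff[of T] by (metis One_nat_def Suc_leI empty_iff)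
      ultimately show ?thesis unfolding cnt_def using vb(7) True fT by simp
    qed
    define J where "J = {x. x \<le> n \<and> ?cB x = ?cT x}"
    have finJ: "finite J" unfolding J_def by simp
    have J0: "0 \<in> J" unfolding J_def using cnt_0[of B] cnt_0[of T] vb by simp
    define j where "j = Max J"
    have jJ: "j \<in> J" unfolding j_def using finJ J0 Max_in by blast
    have jmax: "x \<in> J \<Longrightarrow> x \<le> j" for x unfolding j_def using finJ by simp
    have jn: "j < n"
    proof -
      have "j \<le> n" "?cB j = ?cT j" using jJ unfolding J_def by auto
      moreover have "j \<noteq> n" using cn \<open>?cB j = ?cT j\<close> by auto
      ultimately show ?thesis by simp
    qed
    have cj: "?cB j = ?cT j" using jJ unfolding J_def by simp
    have pos: "?cT x < ?cB x" if "j < x" "x \<le> n" for x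
    proof -
      have "x \<notin> J" using jmax that by fastforce
      then show ?thesis using vb(3)[of x] that unfolding J_def by simp
    qed
    define F where "F = {x. j < x \<and> x \<le> n \<and> x \<in> B \<and> ?cB x = ?cT x + 1}"
    have finF: "finite F" unfolding F_def by simp
    have F0: "Suc j \<in> F"
    proof -
      have a: "?cT (Suc j) < ?cB (Suc j)" using pos[of "Suc j"] jn by simp
      have "?cB (Suc j) = ?cB j + (if Suc j \<in> B then 1 else 0)" by (rule cnt_Suc[OF fB])
      moreover have "?cT (Suc j) = ?cT j + (if Suc j \<in> T then 1 else 0)" by (rule cnt_Suc[OF fT])
      ultimately show ?thesis using a cj jn unfolding F_def by (auto split: if_splits)
    qed
    define f where "f = Max F"
    have fF: "f \<in> F" unfolding f_def using finF F0 Max_in by blast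
    have fmax: "x \<in> F \<Longrightarrow> x \<le> f" for x unfolding f_def using finF by simp
    have fj: "j < f" and fn: "f \<le> n" and fB': "f \<in> B" and cf: "?cB f = ?cT f + 1"
      using fF unfolding F_def by auto
    have good: "?cT x + (if Suc x \<in> T then 1 else 0) + 1 \<le> ?cB x" if x: "f \<le> x" "x < n" for x
    proof (rule ccontr)
      assume a: "\<not> ?thesis"
      have e1: "?cT (Suc x) = ?cT x + (if Suc x \<in> T then 1 else 0)" by (rule cnt_Suc[OF fT])
      have e2: "?cB (Suc x) = ?cB x + (if Suc x \<in> B then 1 else 0)" by (rule cnt_Suc[OF fB])
      have "?cT (Suc x) \<le> ?cB x" by (rule vb(4))
      moreover have "?cT x < ?cB x" using pos[of x] x fj by simp
      moreover have "?cT (Suc x) < ?cB (Suc x)" using pos[of "Suc x"] x fj by simp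
      ultimately have "Suc x \<in> F" using a e1 e2 x fj unfolding F_def by (auto split: if_splits)
      then show False using fmax[of "Suc x"] x by simp
    qed
    define T' where "T' = T - {Suc n}"
    define B' where "B' = B - {f}"
    have v': "Valid n T' B'"
    proof -
      have s1: "T' \<subseteq> {1..n}" using vb(5) unfolding T'_def by (auto simp: le_Suc_eq)
      have s2: "B' \<subseteq> {1..n}" using Bn unfolding B'_def by auto
      have c: "card T' = card B'" unfolding T'_def B'_def using True fB' fT fB vb(7) by simp
      have "card {t\<in>T'. t \<le> m} \<le> card {b\<in>B'. b < m}" for m
      proof (cases m)
        case 0
        have e: "{t\<in>T'. t \<le> m} = {}" using s1 0 by auto
        show ?thesis unfolding e by simp
      next
        case (Suc x)
        have l: "card {t\<in>T'. t \<le> m} = cnt T' (Suc x)" unfolding cnt_def Suc ..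
        have "{b\<in>B'. b < Suc x} = {b\<in>B'. b \<le> x}" by auto
        then have r: "card {b\<in>B'. b < m} = cnt B' x" unfolding cnt_def Suc by simp
        show ?thesis
        proof (cases "x < n")
          case False
          have "{t\<in>T'. t \<le> m} = T'" "{b\<in>B'. b < m} = B'" using s1 s2 False Suc by auto
          then show ?thesis using c by simp
        next
          case xn: True
          have "cnt T' (Suc x) = ?cT (Suc x)" unfolding T'_def by (rule cnt_rem_gt) (use xn in simp)
          also have "\<dots> = ?cT x + (if Suc x \<in> T then 1 else 0)" by (rule cnt_Suc[OF fT])
          finally have a: "cnt T' (Suc x) = ?cT x + (if Suc x \<in> T then 1 else 0)" .
          show ?thesis
          proof (cases "f \<le> x")
            case True
            have "cnt B' x = ?cB x - 1" unfolding B'_def using cnt_rem[OF fB, of f x] fB' True by simp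
            then show ?thesis using l r a good[OF True xn] by simp
          next
            case False
            have "cnt B' x = ?cB x" unfolding B'_def by (rule cnt_rem_gt) (use False in simp)
            then show ?thesis using l r a vb(4)[of x] cnt_Suc[OF fT, of x] by simp
          qed
        qed
      qed
      then show ?thesis unfolding Valid_def using s1 s2 c by blast
    qed
    obtain s where s: "pe n s" "avoids231 n s" "desc_tops n s = T'" "desc_bots n s = B'"
      using Suc.IH[OF v'] by blast
    have cT': "cnt T' x = ?cT x" if "x \<le> n" for x unfolding T'_def by (rule cnt_rem_gt) (use that in simp)
    have cB'1: "cnt B' x = ?cB x" if "x < f" for x unfolding B'_def by (rule cnt_rem_gt) (use that in simp)
    have z: "strd n s j = 0" using lemH'[OF s(1), of j] s(3,4) cT'[of j] cB'1[OF fj] cj jn by simp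
    note G = lemG[OF s(1,2) jn z]
    have zf: "strd n s f = 0"
    proof -
      have "cnt B' f = ?cB f - 1" unfolding B'_def using cnt_rem[OF fB, of f f] fB' by simp
      then show ?thesis using lemH'[OF s(1), of f] s(3,4) cT'[OF fn] cf by simp
    qed
    have pf: "strd n s x > 0" if "j < x" "x < f" for x
      using lemH'[OF s(1), of x] s(3,4) cT'[of x] cB'1[OF that(2)] pos[of x] that fn by simp
    have gf: "s (Suc j) = f"
    proof (rule ccontr)
      assume "s (Suc j) \<noteq> f"
      then consider "s (Suc j) < f" | "f < s (Suc j)" by linarith
      then show False
      proof cases
        case 1 then show ?thesis using pf[OF G(1) 1] G(2) by simp
      next
        case 2 then show ?thesis using G(3)[OF fj 2] zf by simp
      qed
    qed
    let ?p = "Suc j"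
    have pre: "s ` {1..j} = {1..j}" using lemZ[OF s(1) _ z] jn by simp
    have cl: "s i < s k" if "1 \<le> i" "i < ?p" "?p \<le> k" "k \<le> n" for i k
    proof -
      have "s i \<le> j" using pre that by auto
      moreover have "\<not> s k \<le> j" using lemZ'[OF s(1) _ z, of k] jn that by auto
      ultimately show ?thesis by simp
    qed
    have rng: "\<And>i. i \<in> {1..n} \<Longrightarrow> s i < Suc n" using pe_range[OF s(1)] by fastforce
    have p: "1 \<le> ?p" "?p \<le> Suc n" using jn by auto
    have cl2: "s (?p - 1) < s ?p" if "2 \<le> ?p" "?p \<le> n" using cl[of "?p - 1" ?p] that by auto
    have "pe (Suc n) (ins ?p (Suc n) s)" by (rule pe_ins[OF s(1)]) (use p in simp)
    moreover have "avoids231 (Suc n) (ins ?p (Suc n) s)" by (rule av_ins[OF s(2) p cl rng]) auto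
    moreover have "desc_tops (Suc n) (ins ?p (Suc n) s) = T"
      using tops_bots_ins(1)[OF p rng cl2] s(3) jn True unfolding T'_def by auto
    moreover have "desc_bots (Suc n) (ins ?p (Suc n) s) = B"
      using tops_bots_ins(2)[OF p rng cl2] s(4) jn gf fB' unfolding B'_def by auto
    ultimately show ?thesis by blast
  qed
qed


lemma card_bij_filter: assumes "bij_betw s {1..n} {1..n}"
  shows "card {i\<in>{1..n}. P (s i)} = card {x\<in>{1..n}. P x}"
proof -
  have "s ` {i\<in>{1..n}. P (s i)} = {x\<in>{1..n}. P x}"
  proof (intro equalityI subsetI)
    fix x assume "x \<in> s ` {i\<in>{1..n}. P (s i)}" then show "x \<in> {x\<in>{1..n}. P x}" using assms unfolding bij_betw_def by auto
  next
    fix x assume x: "x \<in> {x\<in>{1..n}. P x}"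
    then obtain i where "i \<in> {1..n}" "s i = x" using assms unfolding bij_betw_def by (metis (no_types, lifting) imageE mem_Collect_eq)
    then show "x \<in> s ` {i\<in>{1..n}. P (s i)}" using x by auto
  qed
  moreover have "inj_on s {i\<in>{1..n}. P (s i)}" using assms unfolding bij_betw_def by (auto intro: inj_on_subset)
  ultimately show ?thesis by (metis card_image)
qed

lemma sum_swap_card: "finite S \<Longrightarrow> (\<Sum>i\<in>S. card {j\<in>S. P i j}) = (\<Sum>j\<in>S. card {i\<in>S. P i j})"
proof -
  assume fS: "finite S"
  have c: "card {j\<in>S. Q j} = (\<Sum>j\<in>S. if Q j then 1 else 0)" for Q :: "'a \<Rightarrow> bool"
    using fS by (simp add: sum.inter_filter[symmetric])
  show ?thesis unfolding c by (rule sum.swap)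
qed

context
  fixes n s
  assumes sS: "s \<in> S231 n"
begin

abbreviation "T \<equiv> desc_tops n s"
abbreviation "B \<equiv> desc_bots n s"
abbreviation "t \<equiv> Phi n s"

lemma s_perm: "s permutes {1..n}" using sS unfolding S231_def by simp
lemma s_av: "avoids231 n s" using sS unfolding S231_def by simp
lemma s_pe: "pe n s" unfolding pe_def using s_perm by (rule permutes_imp_bij)
lemma t_sm: "smono n T B t" by (rule Phi_smono[OF s_perm s_av])
lemma t_va: "Valid n T B" by (rule valid_perm[OF s_pe])
lemma t_perm: "t permutes {1..n}" using t_sm unfolding smono_def by simp
lemma TB_sub: "T \<subseteq> {1..n}" "B \<subseteq> {1..n}" using tops_sub[OF s_pe] bots_sub[OF s_pe] by auto
lemma cTB: "card T = card B" using card_tops[OF s_pe] card_bots[OF s_pe] by simp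
lemma cD: "card (Dset n s) = card T" using card_tops[OF s_pe] by simp

lemma drop_t: "x \<in> {1..n} \<Longrightarrow> t x < x \<longleftrightarrow> x \<in> T" by (rule A_drop[OF t_sm t_va])
lemma img_t: "x \<in> {1..n} \<Longrightarrow> t x \<in> B \<longleftrightarrow> x \<in> T" by (rule A_img[OF t_sm t_va])
lemma fix_t: "x \<in> {1..n} \<Longrightarrow> t x = x \<longleftrightarrow> x \<notin> T \<and> x \<notin> B \<and> card {y\<in>B. y < x} = card {y\<in>T. y < x}"
  by (rule A_fix[OF t_sm t_va])

lemma inv_t: assumes x: "x \<in> {1..n}"
  shows "inv t x > x \<longleftrightarrow> x \<in> B" "inv t x = x \<longleftrightarrow> t x = x" "inv t x \<in> {1..n}" "t (inv t x) = x"
proof -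
  have tp: "t permutes {1..n}" by (rule t_perm)
  show ty: "t (inv t x) = x" using permutes_inverses(1)[OF tp] by simp
  show yr: "inv t x \<in> {1..n}" using x permutes_in_image[OF permutes_inv[OF tp]] by simp
  have "inv t x > t (inv t x) \<longleftrightarrow> inv t x \<in> T" using drop_t[OF yr] by simp
  then show "inv t x > x \<longleftrightarrow> x \<in> B" using img_t[OF yr] ty by simp
  show "inv t x = x \<longleftrightarrow> t x = x" using permutes_inv_eq[OF tp] by metis
qed

lemma role: assumes i: "i \<in> {1..n}"
  shows "ext n s (i - 1) < ext n s i \<longleftrightarrow> s i \<notin> B"
    "ext n s (i - 1) > ext n s i \<longleftrightarrow> s i \<in> B"
    "ext n s i > ext n s (i + 1) \<longleftrightarrow> s i \<in> T"
    "ext n s i < ext n s (i + 1) \<longleftrightarrow> s i \<notin> T"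
proof -
  have pe: "pe n s" by (rule s_pe)
  have si: "s i \<in> {1..n}" using pe_range[OF pe i] .
  have B: "s i \<in> B \<longleftrightarrow> 2 \<le> i \<and> s i < s (i - 1)"
  proof
    assume "s i \<in> B"
    then obtain k where k: "k \<in> Dset n s" "s (Suc k) = s i" unfolding bots_eq by auto
    then have "Suc k \<in> {1..n}" unfolding Dset_def by auto
    then have "Suc k = i" using pe_eq[OF pe _ i] k by auto
    then show "2 \<le> i \<and> s i < s (i - 1)" using k unfolding Dset_def by auto
  next
    assume h: "2 \<le> i \<and> s i < s (i - 1)"
    then have "i - 1 \<in> Dset n s" "Suc (i - 1) = i" using i unfolding Dset_def by auto
    then show "s i \<in> B" unfolding bots_eq by (metis image_eqI)
  qed
  have T: "s i \<in> T \<longleftrightarrow> i < n \<and> s (Suc i) < s i"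
  proof
    assume "s i \<in> T"
    then obtain k where k: "k \<in> Dset n s" "s k = s i" unfolding tops_eq by auto
    then have "k \<in> {1..n}" unfolding Dset_def by auto
    then have "k = i" using pe_eq[OF pe _ i] k by auto
    then show "i < n \<and> s (Suc i) < s i" using k unfolding Dset_def by auto
  next
    assume h: "i < n \<and> s (Suc i) < s i"
    then have "i \<in> Dset n s" using i unfolding Dset_def by auto
    then show "s i \<in> T" unfolding tops_eq by auto
  qed
  have prev: "s (i - 1) \<noteq> s i" if "2 \<le> i"
  proof -
    have "i - 1 \<in> {1..n}" using that i by auto
    then show ?thesis using pe_eq[OF pe _ i, of "i - 1"] that by auto
  qed
  have nxt: "i < n \<Longrightarrow> s (Suc i) \<noteq> s i" using pe_eq[OF pe _ i, of "Suc i"] i by auto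
  have e0: "ext n s (i - 1) = (if i = 1 then 0 else s (i - 1))" using i unfolding ext_def by auto
  have e1: "ext n s i = s i" using i unfolding ext_def by auto
  have e2: "ext n s (i + 1) = (if i = n then n + 1 else s (Suc i))" using i unfolding ext_def by auto
  show "ext n s (i - 1) < ext n s i \<longleftrightarrow> s i \<notin> B"
    unfolding e0 e1 B using si prev i by (cases "i = 1") auto
  show "ext n s (i - 1) > ext n s i \<longleftrightarrow> s i \<in> B"
    unfolding e0 e1 B using si prev i by (cases "i = 1") auto
  show "ext n s i > ext n s (i + 1) \<longleftrightarrow> s i \<in> T"
    unfolding e2 e1 T using si nxt i by (cases "i = n") auto
  show "ext n s i < ext n s (i + 1) \<longleftrightarrow> s i \<notin> T"
    unfolding e2 e1 T using si nxt i by (cases "i = n") auto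
qed

lemma cbf: "card {i\<in>{1..n}. P (s i)} = card {x\<in>{1..n}. P x}"
  by (rule card_bij_filter) (use s_pe in \<open>simp add: pe_def\<close>)

lemma st_lpk: "lpk n s = card {x\<in>{1..n}. x \<notin> B \<and> x \<in> T}"
proof -
  have "{i \<in> {1..n}. ext n s (i - 1) < ext n s i \<and> ext n s i > ext n s (i + 1)} = {i\<in>{1..n}. s i \<notin> B \<and> s i \<in> T}"
    by (rule set_eqI) (use role in blast)
  then show ?thesis unfolding lpk_def using cbf[of "\<lambda>x. x \<notin> B \<and> x \<in> T"] by simp
qed

lemma st_lval: "lval n s = card {x\<in>{1..n}. x \<in> B \<and> x \<notin> T}"
proof -
  have "{i \<in> {1..n}. ext n s (i - 1) > ext n s i \<and> ext n s i < ext n s (i + 1)} = {i\<in>{1..n}. s i \<in> B \<and> s i \<notin> T}"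
    by (rule set_eqI) (use role in blast)
  then show ?thesis unfolding lval_def using cbf[of "\<lambda>x. x \<in> B \<and> x \<notin> T"] by simp
qed

lemma st_lda: "lda n s = card {x\<in>{1..n}. x \<notin> B \<and> x \<notin> T}"
proof -
  have "{i \<in> {1..n}. ext n s (i - 1) < ext n s i \<and> ext n s i < ext n s (i + 1)} = {i\<in>{1..n}. s i \<notin> B \<and> s i \<notin> T}"
    by (rule set_eqI) (use role in blast)
  then show ?thesis unfolding lda_def using cbf[of "\<lambda>x. x \<notin> B \<and> x \<notin> T"] by simp
qed

lemma st_ldd: "ldd n s = card {x\<in>{1..n}. x \<in> B \<and> x \<in> T}"
proof -
  have "{i \<in> {1..n}. ext n s (i - 1) > ext n s i \<and> ext n s i > ext n s (i + 1)} = {i\<in>{1..n}. s i \<in> B \<and> s i \<in> T}"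
    by (rule set_eqI) (use role in blast)
  then show ?thesis unfolding ldd_def using cbf[of "\<lambda>x. x \<in> B \<and> x \<in> T"] by simp
qed

lemma st_des: "des n s = card T"
proof -
  have "{i. 1 \<le> i \<and> i \<le> n - 1 \<and> s i > s (i + 1)} = Dset n s" unfolding Dset_def by auto
  then show ?thesis unfolding des_def using cD by simp
qed

lemma st_asc: "asc_inf n s = card {x\<in>{1..n}. x \<notin> T}"
proof -
  have "{i \<in> {1..n}. ext n s i < ext n s (i + 1)} = {i\<in>{1..n}. s i \<notin> T}" by (rule set_eqI) (use role in blast)
  then show ?thesis unfolding asc_inf_def using cbf[of "\<lambda>x. x \<notin> T"] by simp
qed

lemma ct_cpk: "cpk n t = card {x\<in>{1..n}. x \<notin> B \<and> x \<in> T}"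
proof -
  have "{x \<in> {1..n}. inv t x < x \<and> x > t x} = {x\<in>{1..n}. x \<notin> B \<and> x \<in> T}"
  proof (intro equalityI subsetI)
    fix x assume "x \<in> {x \<in> {1..n}. inv t x < x \<and> x > t x}"
    then have x: "x \<in> {1..n}" "inv t x < x" "x > t x" by auto
    then show "x \<in> {x\<in>{1..n}. x \<notin> B \<and> x \<in> T}" using inv_t(1)[OF x(1)] drop_t[OF x(1)] by auto
  next
    fix x assume x: "x \<in> {x\<in>{1..n}. x \<notin> B \<and> x \<in> T}"
    then have "t x < x" using drop_t by blast
    moreover then have "inv t x \<noteq> x" using inv_t(2)[of x] x by auto
    ultimately show "x \<in> {x \<in> {1..n}. inv t x < x \<and> x > t x}" using inv_t(1)[of x] x by auto
  qed
  then show ?thesis unfolding cpk_def by simp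
qed

lemma ct_cval: "cval n t = card {x\<in>{1..n}. x \<in> B \<and> x \<notin> T}"
proof -
  have "{x \<in> {1..n}. inv t x > x \<and> x < t x} = {x\<in>{1..n}. x \<in> B \<and> x \<notin> T}"
  proof (intro equalityI subsetI)
    fix x assume "x \<in> {x \<in> {1..n}. inv t x > x \<and> x < t x}"
    then have x: "x \<in> {1..n}" "inv t x > x" "x < t x" by auto
    then show "x \<in> {x\<in>{1..n}. x \<in> B \<and> x \<notin> T}" using inv_t(1)[OF x(1)] drop_t[OF x(1)] by auto
  next
    fix x assume x: "x \<in> {x\<in>{1..n}. x \<in> B \<and> x \<notin> T}"
    then have "inv t x > x" using inv_t(1) by blast
    then have "t x \<noteq> x" using inv_t(2)[of x] x by auto
    moreover have "\<not> t x < x" using drop_t x by blast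
    ultimately show "x \<in> {x \<in> {1..n}. inv t x > x \<and> x < t x}" using inv_t(1)[of x] x by auto
  qed
  then show ?thesis unfolding cval_def by simp
qed

lemma ct_cdd: "cdd n t = card {x\<in>{1..n}. x \<in> B \<and> x \<in> T}"
proof -
  have "{x \<in> {1..n}. inv t x > x \<and> x > t x} = {x\<in>{1..n}. x \<in> B \<and> x \<in> T}"
  proof (rule set_eqI)
    fix x show "x \<in> {x \<in> {1..n}. inv t x > x \<and> x > t x} \<longleftrightarrow> x \<in> {x\<in>{1..n}. x \<in> B \<and> x \<in> T}"
      using inv_t(1)[of x] drop_t[of x] by auto
  qed
  then show ?thesis unfolding cdd_def by simp
qed

lemma ct_cda: "cda n t = card {x\<in>{1..n}. x \<notin> B \<and> x \<notin> T \<and> t x \<noteq> x}"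
proof -
  have "{x \<in> {1..n}. inv t x < x \<and> x < t x} = {x\<in>{1..n}. x \<notin> B \<and> x \<notin> T \<and> t x \<noteq> x}"
  proof (intro equalityI subsetI)
    fix x assume "x \<in> {x \<in> {1..n}. inv t x < x \<and> x < t x}"
    then have x: "x \<in> {1..n}" "inv t x < x" "x < t x" by auto
    then show "x \<in> {x\<in>{1..n}. x \<notin> B \<and> x \<notin> T \<and> t x \<noteq> x}" using inv_t(1)[OF x(1)] drop_t[OF x(1)] by auto
  next
    fix x assume x: "x \<in> {x\<in>{1..n}. x \<notin> B \<and> x \<notin> T \<and> t x \<noteq> x}"
    then have "\<not> inv t x > x" "inv t x \<noteq> x" using inv_t(1,2)[of x] by auto
    moreover have "\<not> t x < x" using drop_t x by blast
    ultimately show "x \<in> {x \<in> {1..n}. inv t x < x \<and> x < t x}" using x by auto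
  qed
  then show ?thesis unfolding cda_def by simp
qed

lemma ct_drop: "drop_st n t = card T"
proof -
  have "{i \<in> {1..n}. t i < i} = T"
  proof (rule set_eqI)
    fix x show "x \<in> {i \<in> {1..n}. t i < i} \<longleftrightarrow> x \<in> T" using drop_t[of x] TB_sub by auto
  qed
  then show ?thesis unfolding drop_st_def by simp
qed

lemma ct_excfix: "exc n t + fix_st n t = card {x\<in>{1..n}. x \<notin> T}"
proof -
  have "{x\<in>{1..n}. x \<notin> T} = {i \<in> {1..n}. t i > i} \<union> {i \<in> {1..n}. t i = i}"
  proof (rule set_eqI)
    fix x show "x \<in> {x\<in>{1..n}. x \<notin> T} \<longleftrightarrow> x \<in> {i \<in> {1..n}. t i > i} \<union> {i \<in> {1..n}. t i = i}"
      using drop_t[of x] by auto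
  qed
  moreover have "{i \<in> {1..n}. t i > i} \<inter> {i \<in> {1..n}. t i = i} = {}" by auto
  ultimately show ?thesis unfolding exc_def fix_st_def by (simp add: card_Un_disjoint[symmetric])
qed

end


context
  fixes n s
  assumes sS: "s \<in> S231 n"
begin

abbreviation "TT \<equiv> desc_tops n s"
abbreviation "BB \<equiv> desc_bots n s"
abbreviation "tt \<equiv> Phi n s"

lemma Bchar: assumes i: "i \<in> {1..n}" shows "s i \<in> BB \<longleftrightarrow> 2 \<le> i \<and> s i < s (i - 1)"
proof
  have pe: "pe n s" by (rule s_pe[OF sS])
  assume "s i \<in> BB"
  then obtain k where k: "k \<in> Dset n s" "s (Suc k) = s i" unfolding bots_eq by auto
  then have "Suc k \<in> {1..n}" unfolding Dset_def by auto
  then have "Suc k = i" using pe_eq[OF pe _ i] k by auto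
  then show "2 \<le> i \<and> s i < s (i - 1)" using k unfolding Dset_def by auto
next
  assume h: "2 \<le> i \<and> s i < s (i - 1)"
  then have "i - 1 \<in> Dset n s" "Suc (i - 1) = i" using i unfolding Dset_def by auto
  then show "s i \<in> BB" unfolding bots_eq by (metis image_eqI)
qed

lemma Tchar: assumes i: "i \<in> {1..n}" shows "s i \<in> TT \<longleftrightarrow> i \<in> Dset n s"
proof
  have pe: "pe n s" by (rule s_pe[OF sS])
  assume "s i \<in> TT"
  then obtain k where k: "k \<in> Dset n s" "s k = s i" unfolding tops_eq by auto
  then have "k \<in> {1..n}" unfolding Dset_def by auto
  then have "k = i" using pe_eq[OF pe _ i] k by auto
  then show "i \<in> Dset n s" using k by simp
next
  assume "i \<in> Dset n s" then show "s i \<in> TT" unfolding tops_eq by auto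
qed

lemma LR: assumes i: "i \<in> {1..n}" and nB: "s i \<notin> BB" and nT: "s i \<notin> TT"
  shows "(\<forall>j. 1 \<le> j \<and> j < i \<longrightarrow> s j < s i) \<longleftrightarrow> strd n s (s i - 1) = 0"
proof
  have pe: "pe n s" by (rule s_pe[OF sS])
  have av: "avoids231 n s" by (rule s_av[OF sS])
  have u1: "s i \<ge> 1" using pe_range[OF pe i] by simp
  assume lr: "\<forall>j. 1 \<le> j \<and> j < i \<longrightarrow> s j < s i"
  show "strd n s (s i - 1) = 0"
  proof (rule ccontr)
    assume "strd n s (s i - 1) \<noteq> 0"
    then have "{k \<in> Dset n s. s (Suc k) \<le> s i - 1 \<and> s i - 1 < s k} \<noteq> {}" unfolding strd_def by (metis card.empty)
    then obtain k where k: "k \<in> Dset n s" "s (Suc k) \<le> s i - 1" "s i - 1 < s k" by blast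
    have kr: "1 \<le> k" "k < n" using k unfolding Dset_def by auto
    have "k \<noteq> i" using k nT Tchar[OF i] by auto
    then have "s k \<noteq> s i" using pe_eq[OF pe _ i, of k] kr by auto
    then have sk: "s i < s k" "s (Suc k) < s i" using k u1 by auto
    consider "k < i" | "i < k" using \<open>k \<noteq> i\<close> by linarith
    then show False
    proof cases
      case 1 then show ?thesis using lr kr sk by auto
    next
      case 2 then show ?thesis using no231[OF av, of i k "Suc k"] i kr sk by auto
    qed
  qed
next
  have pe: "pe n s" by (rule s_pe[OF sS])
  assume z: "strd n s (s i - 1) = 0"
  show "\<forall>j. 1 \<le> j \<and> j < i \<longrightarrow> s j < s i"
  proof (intro allI impI)
    fix j assume j: "1 \<le> j \<and> j < i"
    show "s j < s i"
    proof (rule ccontr)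
      assume "\<not> s j < s i"
      moreover have "s j \<noteq> s i" using pe_eq[OF pe _ i, of j] j i by auto
      ultimately have gt: "s i < s j" by simp
      have i2: "2 \<le> i" using j by simp
      have im: "i - 1 \<in> {1..n}" using i2 i by auto
      have "s (i - 1) \<noteq> s i" using pe_eq[OF pe im i] i2 by auto
      then have prev: "s (i - 1) < s i" using nB Bchar[OF i] i2 by auto
      have "j \<noteq> i - 1" using prev gt by auto
      then have "j < i - 1" using j by arith
      then have "strd n s (s i - 1) > 0" using walkD[of j "i - 1" n "s i - 1" s] j im gt prev by auto
      then show False using z by simp
    qed
  qed
qed

lemma st_fmax: "fmax n s = fix_st n tt"
proof -
  have pe: "pe n s" by (rule s_pe[OF sS])
  have e1: "{i \<in> {1..n}. ext n s (i - 1) < ext n s i \<and> ext n s i < ext n s (i + 1) \<and> (\<forall>j. 1 \<le> j \<and> j < i \<longrightarrow> s j < s i)}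
      = {i\<in>{1..n}. s i \<notin> BB \<and> s i \<notin> TT \<and> strd n s (s i - 1) = 0}"
  proof (rule set_eqI)
    fix i show "i \<in> {i \<in> {1..n}. ext n s (i - 1) < ext n s i \<and> ext n s i < ext n s (i + 1) \<and> (\<forall>j. 1 \<le> j \<and> j < i \<longrightarrow> s j < s i)}
      \<longleftrightarrow> i \<in> {i\<in>{1..n}. s i \<notin> BB \<and> s i \<notin> TT \<and> strd n s (s i - 1) = 0}"
      using role[OF sS, of i] LR[of i] by auto
  qed
  have e2: "{x \<in> {1..n}. tt x = x} = {x\<in>{1..n}. x \<notin> BB \<and> x \<notin> TT \<and> strd n s (x - 1) = 0}"
  proof (rule set_eqI)
    fix x
    show "x \<in> {x \<in> {1..n}. tt x = x} \<longleftrightarrow> x \<in> {x\<in>{1..n}. x \<notin> BB \<and> x \<notin> TT \<and> strd n s (x - 1) = 0}"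
    proof (cases "x \<in> {1..n}")
      case True
      have "{y\<in>BB. y < x} = {y\<in>BB. y \<le> x - 1}" "{y\<in>TT. y < x} = {y\<in>TT. y \<le> x - 1}" using True by auto
      then have "card {y\<in>BB. y < x} = card {y\<in>TT. y < x} \<longleftrightarrow> strd n s (x - 1) = 0"
        using lemH'[OF pe, of "x - 1"] unfolding cnt_def by simp
      then show ?thesis using fix_t[OF sS True] True by auto
    qed auto
  qed
  have "fmax n s = card {i\<in>{1..n}. s i \<notin> BB \<and> s i \<notin> TT \<and> strd n s (s i - 1) = 0}" unfolding fmax_def e1 ..
  also have "\<dots> = card {x\<in>{1..n}. x \<notin> BB \<and> x \<notin> TT \<and> strd n s (x - 1) = 0}" by (rule cbf[OF sS])
  also have "\<dots> = fix_st n tt" unfolding fix_st_def e2 ..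
  finally show ?thesis .
qed

end


context
  fixes n s
  assumes sS: "s \<in> S231 n"
begin

lemma st_312: "st312 n s + card (desc_tops n s) + \<Sum> (desc_bots n s) = \<Sum> (desc_tops n s)"
proof -
  have pe: "pe n s" by (rule s_pe[OF sS])
  have av: "avoids231 n s" by (rule s_av[OF sS])
  let ?D = "Dset n s"
  let ?C = "\<lambda>i. {j\<in>{1..n}. s (Suc i) < s j \<and> s j < s i}"
  have eS: "{(i, j). 1 \<le> i \<and> i + 1 < j \<and> j \<le> n \<and> s (i + 1) < s j \<and> s j < s i} = Sigma ?D ?C"
  proof (intro equalityI subsetI)
    fix x assume "x \<in> {(i, j). 1 \<le> i \<and> i + 1 < j \<and> j \<le> n \<and> s (i + 1) < s j \<and> s j < s i}"
    then show "x \<in> Sigma ?D ?C" unfolding Dset_def by auto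
  next
    fix x assume x: "x \<in> Sigma ?D ?C"
    then obtain i j where ij: "x = (i, j)" "i \<in> ?D" "j \<in> {1..n}" "s (Suc i) < s j" "s j < s i" by blast
    have ir: "1 \<le> i" "i < n" using ij unfolding Dset_def by auto
    have "j \<noteq> i" "j \<noteq> Suc i" using ij by auto
    moreover have "\<not> j < i" using no231[OF av, of j i "Suc i"] ij ir by auto
    ultimately have "Suc i < j" by simp
    then show "x \<in> {(i, j). 1 \<le> i \<and> i + 1 < j \<and> j \<le> n \<and> s (i + 1) < s j \<and> s j < s i}" using ij ir by auto
  qed
  have cC: "card (?C i) = s i - Suc (s (Suc i))" if i: "i \<in> ?D" for i
  proof -
    have ir: "i \<in> {1..n}" using i unfolding Dset_def by auto
    have "card (?C i) = card {x\<in>{1..n}. s (Suc i) < x \<and> x < s i}"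
      by (rule cbf[OF sS, of "\<lambda>x. s (Suc i) < x \<and> x < s i"])
    also have "{x\<in>{1..n}. s (Suc i) < x \<and> x < s i} = {s (Suc i)<..<s i}" using pe_range[OF pe ir] by auto
    finally show ?thesis by simp
  qed
  have "st312 n s = (\<Sum>i\<in>?D. card (?C i))" unfolding st312_def eS by (rule card_SigmaI) auto
  also have "\<dots> = (\<Sum>i\<in>?D. s i - Suc (s (Suc i)))" by (rule sum.cong) (use cC in auto)
  finally have a: "st312 n s = (\<Sum>i\<in>?D. s i - Suc (s (Suc i)))" .
  have injD: "inj_on s ?D" by (rule inj_on_subset[OF pe_inj[OF pe]]) (auto simp: Dset_def)
  have injD2: "inj_on (\<lambda>i. s (Suc i)) ?D"
  proof (rule inj_onI)
    fix a b assume "a \<in> ?D" "b \<in> ?D" "s (Suc a) = s (Suc b)"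
    then show "a = b" using pe_eq[OF pe, of "Suc a" "Suc b"] unfolding Dset_def by auto
  qed
  have sT: "\<Sum> (desc_tops n s) = (\<Sum>i\<in>?D. s i)" unfolding tops_eq by (simp add: sum.reindex[OF injD])
  have sB: "\<Sum> (desc_bots n s) = (\<Sum>i\<in>?D. s (Suc i))"
  proof -
    have "desc_bots n s = (\<lambda>i. s (Suc i)) ` ?D" unfolding bots_eq by (simp add: image_image)
    then show ?thesis using sum.reindex[OF injD2, of "\<lambda>x. x"] by simp
  qed
  have "(\<Sum>i\<in>?D. s i - Suc (s (Suc i))) + card ?D + (\<Sum>i\<in>?D. s (Suc i)) = (\<Sum>i\<in>?D. (s i - Suc (s (Suc i))) + 1 + s (Suc i))"
    by (simp only: sum.distrib card_eq_sum)
  also have "\<dots> = (\<Sum>i\<in>?D. s i)" by (rule sum.cong) (auto simp: Dset_def)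
  finally show ?thesis using a sT sB cD[OF sS] by simp
qed

lemma cnt_cross: assumes q: "q permutes {1..n}" and i: "i \<le> n"
  shows "card {j\<in>{1..n}. i < j \<and> q j \<le> i} = card {j\<in>{1..n}. j \<le> i \<and> i < q j}"
proof -
  let ?X = "{j\<in>{1..n}. j \<le> i}" and ?Y = "{j\<in>{1..n}. q j \<le> i}"
  have bq: "bij_betw q {1..n} {1..n}" using q by (rule permutes_imp_bij)
  have "?X = {1..i}" using i by auto
  then have cX: "card ?X = i" by simp
  have cY: "card ?Y = card ?X" using card_bij_filter[OF bq, of "\<lambda>x. x \<le> i"] by simp
  have f: "finite ?X" "finite ?Y" by auto
  have "card (?X - ?Y) = card ?X - card (?X \<inter> ?Y)" by (rule card_Diff_subset_Int) simp
  moreover have "card (?Y - ?X) = card ?Y - card (?Y \<inter> ?X)" by (rule card_Diff_subset_Int) simp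
  moreover have "?X - ?Y = {j\<in>{1..n}. j \<le> i \<and> i < q j}" by auto
  moreover have "?Y - ?X = {j\<in>{1..n}. i < j \<and> q j \<le> i}" by auto
  ultimately show ?thesis using cY by (simp add: Int_commute)
qed

end


context
  fixes n s
  assumes sS: "s \<in> S231 n"
begin

lemma icr_val: "icr n (Phi n s) + card (desc_bots n s) + \<Sum> (desc_bots n s) = \<Sum> (desc_tops n s)"
proof -
  let ?t = "Phi n s" and ?T = "desc_tops n s" and ?B = "desc_bots n s"
  define q where "q = inv ?t"
  have tp: "?t permutes {1..n}" by (rule t_perm[OF sS])
  have qp: "q permutes {1..n}" unfolding q_def by (rule permutes_inv[OF tp])
  have sm: "smono n ?T ?B ?t" by (rule t_sm[OF sS])
  have smT: "smo ?T ?t" and smC: "smo ({1..n} - ?T) ?t" using sm unfolding smono_def by auto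
  have Bs: "?B \<subseteq> {1..n}" and Ts: "?T \<subseteq> {1..n}" using TB_sub[OF sS] by auto
  have qgt: "x \<in> {1..n} \<Longrightarrow> q x > x \<longleftrightarrow> x \<in> ?B" for x unfolding q_def by (rule inv_t(1)[OF sS])
  have qr: "x \<in> {1..n} \<Longrightarrow> q x \<in> {1..n}" for x unfolding q_def by (rule inv_t(3)[OF sS])
  have tq: "x \<in> {1..n} \<Longrightarrow> ?t (q x) = x" for x unfolding q_def by (rule inv_t(4)[OF sS])
  have qB: "x \<in> ?B \<Longrightarrow> q x \<in> ?T" for x using img_t[OF sS qr[of x]] tq[of x] Bs by auto
  have qC: "x \<in> {1..n} - ?B \<Longrightarrow> q x \<in> {1..n} - ?T" for x using img_t[OF sS qr[of x]] tq[of x] qr[of x] by auto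
  have monoB: "q a < q b" if "a \<in> ?B" "b \<in> ?B" "a < b" for a b
  proof -
    have ar: "a \<in> {1..n}" "b \<in> {1..n}" using that Bs by auto
    have "?t (q a) < ?t (q b)" using tq[OF ar(1)] tq[OF ar(2)] that by simp
    then show ?thesis using smo_less_iff[OF smT qB[OF that(1)] qB[OF that(2)]] by simp
  qed
  have monoC: "q a < q b" if "a \<in> {1..n} - ?B" "b \<in> {1..n} - ?B" "a < b" for a b
  proof -
    have ar: "a \<in> {1..n}" "b \<in> {1..n}" using that by auto
    have "?t (q a) < ?t (q b)" using tq[OF ar(1)] tq[OF ar(2)] that by simp
    then show ?thesis using smo_less_iff[OF smC qC[OF that(1)] qC[OF that(2)]] by simp
  qed
  let ?c = "\<lambda>i. card {j \<in> {1..n}. (j < i \<and> i < q j \<and> q j < q i) \<or> (q i < q j \<and> q j \<le> i \<and> i < j)}"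
  let ?A = "\<lambda>i. card {j\<in>{1..n}. j \<le> i \<and> i < q j}"
  have per: "?c i + (if i \<in> ?B then 1 else 0) = ?A i" if i: "i \<in> {1..n}" for i
  proof (cases "i \<in> ?B")
    case True
    have qi: "i < q i" using qgt[OF i] True by simp
    have e1: "{j \<in> {1..n}. (j < i \<and> i < q j \<and> q j < q i) \<or> (q i < q j \<and> q j \<le> i \<and> i < j)}
        = {j\<in>{1..n}. j < i \<and> i < q j}"
    proof (intro equalityI subsetI)
      fix j assume "j \<in> {j \<in> {1..n}. (j < i \<and> i < q j \<and> q j < q i) \<or> (q i < q j \<and> q j \<le> i \<and> i < j)}"
      then show "j \<in> {j\<in>{1..n}. j < i \<and> i < q j}" using qi by auto
    next
      fix j assume j: "j \<in> {j\<in>{1..n}. j < i \<and> i < q j}"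
      then have "j \<in> ?B" using qgt[of j] by auto
      then have "q j < q i" using monoB[of j i] True j by auto
      then show "j \<in> {j \<in> {1..n}. (j < i \<and> i < q j \<and> q j < q i) \<or> (q i < q j \<and> q j \<le> i \<and> i < j)}" using j by auto
    qed
    have e2: "{j\<in>{1..n}. j \<le> i \<and> i < q j} = insert i {j\<in>{1..n}. j < i \<and> i < q j}" using i qi by auto
    show ?thesis unfolding e1 e2 using True by simp
  next
    case False
    have qi: "q i \<le> i" using qgt[OF i] False by simp
    have e1: "{j \<in> {1..n}. (j < i \<and> i < q j \<and> q j < q i) \<or> (q i < q j \<and> q j \<le> i \<and> i < j)}
        = {j\<in>{1..n}. i < j \<and> q j \<le> i}"
    proof (intro equalityI subsetI)
      fix j assume "j \<in> {j \<in> {1..n}. (j < i \<and> i < q j \<and> q j < q i) \<or> (q i < q j \<and> q j \<le> i \<and> i < j)}"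
      then show "j \<in> {j\<in>{1..n}. i < j \<and> q j \<le> i}" using qi by auto
    next
      fix j assume j: "j \<in> {j\<in>{1..n}. i < j \<and> q j \<le> i}"
      then have "j \<notin> ?B" using qgt[of j] by auto
      then have "q i < q j" using monoC[of i j] False i j by auto
      then show "j \<in> {j \<in> {1..n}. (j < i \<and> i < q j \<and> q j < q i) \<or> (q i < q j \<and> q j \<le> i \<and> i < j)}" using j by auto
    qed
    show ?thesis unfolding e1 using False cnt_cross[OF sS qp, of i] i by simp
  qed
  have "icr n ?t = (\<Sum>i\<in>{1..n}. ?c i)" unfolding icr_def cros_def q_def ..
  moreover have "(\<Sum>i\<in>{1..n}. (if i \<in> ?B then 1 else 0)) = card ?B"
  proof -
    have "(\<Sum>i\<in>{1..n}. (if i \<in> ?B then 1 else 0)) = card {i\<in>{1..n}. i \<in> ?B}"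
      by (simp add: sum.inter_filter[symmetric])
    also have "{i\<in>{1..n}. i \<in> ?B} = ?B" using Bs by auto
    finally show ?thesis .
  qed
  moreover have "(\<Sum>i\<in>{1..n}. ?c i + (if i \<in> ?B then 1 else 0)) = (\<Sum>i\<in>{1..n}. ?A i)"
    by (rule sum.cong) (use per in auto)
  moreover have "(\<Sum>i\<in>{1..n}. ?A i) = (\<Sum>j\<in>{1..n}. card {i\<in>{1..n}. j \<le> i \<and> i < q j})"
    by (rule sum_swap_card) simp
  moreover have "(\<Sum>j\<in>{1..n}. card {i\<in>{1..n}. j \<le> i \<and> i < q j}) = (\<Sum>j\<in>{1..n}. q j - j)"
  proof (rule sum.cong)
    fix j assume j: "j \<in> {1..n}"
    have "{i\<in>{1..n}. j \<le> i \<and> i < q j} = {j..<q j}" using j qr[OF j] by auto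
    then show "card {i\<in>{1..n}. j \<le> i \<and> i < q j} = q j - j" by simp
  qed simp
  moreover have "(\<Sum>j\<in>{1..n}. q j - j) = (\<Sum>j\<in>?B. q j - j)"
  proof (rule sum.mono_neutral_right)
    show "\<forall>i\<in>{1..n} - ?B. q i - i = 0"
    proof
      fix i assume i: "i \<in> {1..n} - ?B"
      then have "\<not> i < q i" using qgt[of i] by auto
      then show "q i - i = 0" by simp
    qed
  qed (use Bs in auto)
  moreover have "(\<Sum>j\<in>?B. q j - j) + \<Sum> ?B = \<Sum> ?T"
  proof -
    have "(\<Sum>j\<in>?B. q j - j) + \<Sum> ?B = (\<Sum>j\<in>?B. (q j - j) + j)" by (simp add: sum.distrib)
    also have "\<dots> = (\<Sum>j\<in>?B. q j)"
    proof (rule sum.cong)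
      fix x assume x: "x \<in> ?B"
      then have "x < q x" using qgt[of x] Bs by auto
      then show "q x - x + x = q x" by simp
    qed simp
    also have "\<dots> = \<Sum> (q ` ?B)"
    proof -
      have "inj_on q ?B" using permutes_inj_on[OF qp] .
      then show ?thesis by (simp add: sum.reindex)
    qed
    also have "q ` ?B = ?T"
    proof (intro equalityI subsetI)
      fix y assume "y \<in> q ` ?B" then show "y \<in> ?T" using qB by auto
    next
      fix y assume y: "y \<in> ?T"
      then have yr: "y \<in> {1..n}" using Ts by auto
      have "?t y \<in> ?B" using img_t[OF sS yr] y by simp
      moreover have "q (?t y) = y" unfolding q_def using permutes_inverses(2)[OF tp] by simp
      ultimately show "y \<in> q ` ?B" by (metis image_eqI)
    qed
    finally show ?thesis .
  qed
  ultimately show ?thesis by (simp add: sum.distrib)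
qed

end


context
  fixes n :: nat and t :: "nat \<Rightarrow> nat"
  assumes tp: "t permutes {1..n}"
begin

lemma inv_exc: "exc n (inv t) = drop_st n t"
proof -
  have e: "{i\<in>{1..n}. inv t i > i} = t ` {i\<in>{1..n}. t i < i}"
  proof (intro equalityI subsetI)
    fix x assume x: "x \<in> {i\<in>{1..n}. inv t i > i}"
    have "x \<in> {1..n}" using x by simp
    then have yr: "inv t x \<in> {1..n}" using permutes_in_image[OF permutes_inv[OF tp], of x] by blast
    have tx: "t (inv t x) = x" using permutes_inverses(1)[OF tp] by simp
    have "inv t x \<in> {i\<in>{1..n}. t i < i}" using yr x tx by simp
    then show "x \<in> t ` {i\<in>{1..n}. t i < i}" by (rule image_eqI[of x t "inv t x", OF tx[symmetric]])
  next
    fix x assume "x \<in> t ` {i\<in>{1..n}. t i < i}"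
    then obtain y where y: "y \<in> {1..n}" "t y < y" "x = t y" by auto
    have "inv t x = y" using y permutes_inverses(2)[OF tp] by simp
    moreover have "x \<in> {1..n}" using y(1) permutes_in_image[OF tp, of y] unfolding y(3) by blast
    ultimately show "x \<in> {i\<in>{1..n}. inv t i > i}" using y by simp
  qed
  show ?thesis unfolding exc_def drop_st_def e by (rule card_image) (rule permutes_inj_on[OF tp])
qed

lemma inv_drop: "drop_st n (inv t) = exc n t"
proof -
  have e: "{i\<in>{1..n}. inv t i < i} = t ` {i\<in>{1..n}. t i > i}"
  proof (intro equalityI subsetI)
    fix x assume x: "x \<in> {i\<in>{1..n}. inv t i < i}"
    have "x \<in> {1..n}" using x by simp
    then have yr: "inv t x \<in> {1..n}" using permutes_in_image[OF permutes_inv[OF tp], of x] by blast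
    have tx: "t (inv t x) = x" using permutes_inverses(1)[OF tp] by simp
    have "inv t x \<in> {i\<in>{1..n}. t i > i}" using yr x tx by simp
    then show "x \<in> t ` {i\<in>{1..n}. t i > i}" by (rule image_eqI[of x t "inv t x", OF tx[symmetric]])
  next
    fix x assume "x \<in> t ` {i\<in>{1..n}. t i > i}"
    then obtain y where y: "y \<in> {1..n}" "t y > y" "x = t y" by auto
    have "inv t x = y" using y permutes_inverses(2)[OF tp] by simp
    moreover have "x \<in> {1..n}" using y(1) permutes_in_image[OF tp, of y] unfolding y(3) by blast
    ultimately show "x \<in> {i\<in>{1..n}. inv t i < i}" using y by simp
  qed
  show ?thesis unfolding exc_def drop_st_def e by (rule card_image) (rule permutes_inj_on[OF tp])
qed

lemma inv_fix: "fix_st n (inv t) = fix_st n t"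
proof -
  have "{i\<in>{1..n}. inv t i = i} = {i\<in>{1..n}. t i = i}" by (simp add: permutes_inv_eq[OF tp])
  then show ?thesis unfolding fix_st_def by simp
qed

lemma inv_cdd: "cdd n (inv t) = cda n t"
  unfolding cdd_def cda_def permutes_inv_inv[OF tp] by (simp add: conj_commute)
lemma inv_cda: "cda n (inv t) = cdd n t"
  unfolding cdd_def cda_def permutes_inv_inv[OF tp] by (simp add: conj_commute)
lemma inv_cval: "cval n (inv t) = cval n t"
  unfolding cval_def permutes_inv_inv[OF tp] by (simp add: conj_commute)
lemma inv_cpk: "cpk n (inv t) = cpk n t"
  unfolding cpk_def permutes_inv_inv[OF tp] by (simp add: conj_commute)

end

lemma cong_stats: assumes "\<And>i. i \<in> {1..n} \<Longrightarrow> s i = s' i"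
  shows "desc_tops n s = desc_tops n s'" "desc_bots n s = desc_bots n s'" "avoids231 n s \<longleftrightarrow> avoids231 n s'"
proof -
  have a: "\<And>i. 1 \<le> i \<Longrightarrow> i \<le> n \<Longrightarrow> s i = s' i" using assms by auto
  show "desc_tops n s = desc_tops n s'" unfolding desc_tops_def
  proof (intro equalityI subsetI)
    fix x assume "x \<in> {s i |i. 1 \<le> i \<and> i \<le> n - 1 \<and> s (Suc i) < s i}"
    then obtain i where i: "x = s i" "1 \<le> i" "i \<le> n - 1" "s (Suc i) < s i" by blast
    then have "s i = s' i" "s (Suc i) = s' (Suc i)" using a[of i] a[of "Suc i"] by auto
    then show "x \<in> {s' i |i. 1 \<le> i \<and> i \<le> n - 1 \<and> s' (Suc i) < s' i}" using i by (auto intro!: exI[of _ i])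
  next
    fix x assume "x \<in> {s' i |i. 1 \<le> i \<and> i \<le> n - 1 \<and> s' (Suc i) < s' i}"
    then obtain i where i: "x = s' i" "1 \<le> i" "i \<le> n - 1" "s' (Suc i) < s' i" by blast
    then have "s i = s' i" "s (Suc i) = s' (Suc i)" using a[of i] a[of "Suc i"] by auto
    then show "x \<in> {s i |i. 1 \<le> i \<and> i \<le> n - 1 \<and> s (Suc i) < s i}" using i by (auto intro!: exI[of _ i])
  qed
  show "desc_bots n s = desc_bots n s'" unfolding desc_bots_def
  proof (intro equalityI subsetI)
    fix x assume "x \<in> {s i |i. 2 \<le> i \<and> i \<le> n \<and> s i < s (i - 1)}"
    then obtain i where i: "x = s i" "2 \<le> i" "i \<le> n" "s i < s (i - 1)" by blast
    then have "s i = s' i" "s (i - 1) = s' (i - 1)" using a[of i] a[of "i - 1"] by auto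
    then show "x \<in> {s' i |i. 2 \<le> i \<and> i \<le> n \<and> s' i < s' (i - 1)}" using i by (auto intro!: exI[of _ i])
  next
    fix x assume "x \<in> {s' i |i. 2 \<le> i \<and> i \<le> n \<and> s' i < s' (i - 1)}"
    then obtain i where i: "x = s' i" "2 \<le> i" "i \<le> n" "s' i < s' (i - 1)" by blast
    then have "s i = s' i" "s (i - 1) = s' (i - 1)" using a[of i] a[of "i - 1"] by auto
    then show "x \<in> {s i |i. 2 \<le> i \<and> i \<le> n \<and> s i < s (i - 1)}" using i by (auto intro!: exI[of _ i])
  qed
  show "avoids231 n s \<longleftrightarrow> avoids231 n s'" unfolding avoids231_def
  proof
    assume h: "\<not> (\<exists>i j k. 1 \<le> i \<and> i < j \<and> j < k \<and> k \<le> n \<and> s k < s i \<and> s i < s j)"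
    show "\<not> (\<exists>i j k. 1 \<le> i \<and> i < j \<and> j < k \<and> k \<le> n \<and> s' k < s' i \<and> s' i < s' j)"
    proof
      assume "\<exists>i j k. 1 \<le> i \<and> i < j \<and> j < k \<and> k \<le> n \<and> s' k < s' i \<and> s' i < s' j"
      then obtain i j k where ijk: "1 \<le> i" "i < j" "j < k" "k \<le> n" "s' k < s' i" "s' i < s' j" by blast
      then have "s k < s i" "s i < s j" using a[of i] a[of j] a[of k] by auto
      then show False using h ijk by blast
    qed
  next
    assume h: "\<not> (\<exists>i j k. 1 \<le> i \<and> i < j \<and> j < k \<and> k \<le> n \<and> s' k < s' i \<and> s' i < s' j)"
    show "\<not> (\<exists>i j k. 1 \<le> i \<and> i < j \<and> j < k \<and> k \<le> n \<and> s k < s i \<and> s i < s j)"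
    proof
      assume "\<exists>i j k. 1 \<le> i \<and> i < j \<and> j < k \<and> k \<le> n \<and> s k < s i \<and> s i < s j"
      then obtain i j k where ijk: "1 \<le> i" "i < j" "j < k" "k \<le> n" "s k < s i" "s i < s j" by blast
      then have "s' k < s' i" "s' i < s' j" using a[of i] a[of j] a[of k] by auto
      then show False using h ijk by blast
    qed
  qed
qed


lemma Phi_bij: "bij_betw (Phi n) (S231 n) (S321 n)"
proof -
  have inj: "inj_on (Phi n) (S231 n)"
  proof (rule inj_onI)
    fix s1 s2 assume s1: "s1 \<in> S231 n" and s2: "s2 \<in> S231 n" and e: "Phi n s1 = Phi n s2"
    have T: "desc_tops n s1 = desc_tops n s2"
    proof (intro equalityI subsetI)
      fix x assume x: "x \<in> desc_tops n s1"
      then have xr: "x \<in> {1..n}" using TB_sub[OF s1] by auto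
      show "x \<in> desc_tops n s2" using drop_t[OF s1 xr] drop_t[OF s2 xr] x e by simp
    next
      fix x assume x: "x \<in> desc_tops n s2"
      then have xr: "x \<in> {1..n}" using TB_sub[OF s2] by auto
      show "x \<in> desc_tops n s1" using drop_t[OF s1 xr] drop_t[OF s2 xr] x e by simp
    qed
    have b1: "Phi n s1 ` desc_tops n s1 = desc_bots n s1" using t_sm[OF s1] unfolding smono_def by blast
    have b2: "Phi n s2 ` desc_tops n s2 = desc_bots n s2" using t_sm[OF s2] unfolding smono_def by blast
    have B: "desc_bots n s1 = desc_bots n s2" using b1 b2 T e by simp
    have ag: "s1 i = s2 i" if "i \<in> {1..n}" for i
      by (rule inj231[OF s_pe[OF s1] s_av[OF s1] s_pe[OF s2] s_av[OF s2] T B that])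
    show "s1 = s2"
    proof
      fix i show "s1 i = s2 i"
      proof (cases "i \<in> {1..n}")
        case True then show ?thesis by (rule ag)
      next
        case False then show ?thesis using s_perm[OF s1] s_perm[OF s2] unfolding permutes_def by auto
      qed
    qed
  qed
  have sub: "Phi n ` S231 n \<subseteq> S321 n"
  proof
    fix x assume "x \<in> Phi n ` S231 n"
    then obtain s where s: "s \<in> S231 n" "x = Phi n s" by blast
    show "x \<in> S321 n" unfolding S321_def using t_perm[OF s(1)] A_321[OF t_sm[OF s(1)] t_va[OF s(1)]] s(2) by simp
  qed
  have sup: "S321 n \<subseteq> Phi n ` S231 n"
  proof
    fix tau assume tau: "tau \<in> S321 n"
    have tp: "tau permutes {1..n}" and ta: "avoids321 n tau" using tau unfolding S321_def by auto
    have sm: "smono n (Dr n tau) (tau ` Dr n tau) tau" by (rule B_smono[OF tp ta])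
    have va: "Valid n (Dr n tau) (tau ` Dr n tau)" by (rule B_valid[OF tp ta])
    obtain s0 where s0: "pe n s0" "avoids231 n s0" "desc_tops n s0 = Dr n tau" "desc_bots n s0 = tau ` Dr n tau"
      using exist231[OF va] by blast
    define s where "s = (\<lambda>i. if i \<in> {1..n} then s0 i else i)"
    have ag: "\<And>i. i \<in> {1..n} \<Longrightarrow> s i = s0 i" unfolding s_def by simp
    have "bij_betw s {1..n} {1..n} = bij_betw s0 {1..n} {1..n}" by (rule bij_betw_cong) (simp add: s_def)
    then have "bij_betw s {1..n} {1..n}" using s0(1) unfolding pe_def by simp
    then have sp: "s permutes {1..n}" by (rule bij_imp_permutes) (auto simp: s_def)
    note cs = cong_stats[OF ag]
    have sS: "s \<in> S231 n" unfolding S231_def using sp s0(2) cs(3) by simp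
    have "smono n (Dr n tau) (tau ` Dr n tau) (Phi n s)" using t_sm[OF sS] cs(1,2) s0(3,4) by simp
    then have "Phi n s = tau" using smono_unique sm by blast
    then show "tau \<in> Phi n ` S231 n" using sS by blast
  qed
  show ?thesis unfolding bij_betw_def using inj sub sup by blast
qed


theorem theorem2p11:
  fixes n :: nat
  assumes "n \<ge> 1"
  shows "bij_betw (Phi n) (S231 n) (S321 n) \<and>
    (\<forall>s \<in> S231 n.
      (st312 n s, des n s, asc_inf n s, lda n s - fmax n s, ldd n s, lval n s, lpk n s, fmax n s)
      = (icr n (Phi n s), drop_st n (Phi n s), exc n (Phi n s) + fix_st n (Phi n s), cda n (Phi n s),
         cdd n (Phi n s), cval n (Phi n s), cpk n (Phi n s), fix_st n (Phi n s))
    \<and> (icr n (Phi n s), drop_st n (Phi n s), exc n (Phi n s) + fix_st n (Phi n s), cda n (Phi n s),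
         cdd n (Phi n s), cval n (Phi n s), cpk n (Phi n s), fix_st n (Phi n s))
      = (cros n (inv (Phi n s)), exc n (inv (Phi n s)), drop_st n (inv (Phi n s)) + fix_st n (inv (Phi n s)),
         cdd n (inv (Phi n s)), cda n (inv (Phi n s)), cval n (inv (Phi n s)), cpk n (inv (Phi n s)),
         fix_st n (inv (Phi n s))))"
proof (intro conjI ballI)
  show "bij_betw (Phi n) (S231 n) (S321 n)" by (rule Phi_bij)
next
  fix s assume sS: "s \<in> S231 n"
  let ?t = "Phi n s"
  have tp: "?t permutes {1..n}" by (rule t_perm[OF sS])
  have e1: "st312 n s = icr n ?t" using st_312[OF sS] icr_val[OF sS] cTB[OF sS] by linarith
  have e2: "des n s = drop_st n ?t" using st_des[OF sS] ct_drop[OF sS] by simp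
  have e3: "asc_inf n s = exc n ?t + fix_st n ?t" using st_asc[OF sS] ct_excfix[OF sS] by simp
  have e8: "fmax n s = fix_st n ?t" by (rule st_fmax[OF sS])
  have e4: "lda n s - fix_st n ?t = cda n ?t"
  proof -
    let ?DA = "{x\<in>{1..n}. x \<notin> desc_bots n s \<and> x \<notin> desc_tops n s}"
    let ?F = "{x\<in>{1..n}. ?t x = x}"
    have sub: "?F \<subseteq> ?DA" using fix_t[OF sS] by auto
    have "{x\<in>{1..n}. x \<notin> desc_bots n s \<and> x \<notin> desc_tops n s \<and> ?t x \<noteq> x} = ?DA - ?F" by auto
    then have "cda n ?t = card (?DA - ?F)" using ct_cda[OF sS] by simp
    also have "\<dots> = card ?DA - card ?F" by (rule card_Diff_subset) (use sub in auto)
    finally show ?thesis using st_lda[OF sS] unfolding fix_st_def by simp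
  qed
  have e5: "ldd n s = cdd n ?t" using st_ldd[OF sS] ct_cdd[OF sS] by simp
  have e6: "lval n s = cval n ?t" using st_lval[OF sS] ct_cval[OF sS] by simp
  have e7: "lpk n s = cpk n ?t" using st_lpk[OF sS] ct_cpk[OF sS] by simp
  show "(st312 n s, des n s, asc_inf n s, lda n s - fmax n s, ldd n s, lval n s, lpk n s, fmax n s)
      = (icr n ?t, drop_st n ?t, exc n ?t + fix_st n ?t, cda n ?t, cdd n ?t, cval n ?t, cpk n ?t, fix_st n ?t)"
    by (simp only: e1 e2 e3 e8 e4 e5 e6 e7)
  have f1: "icr n ?t = cros n (inv ?t)" unfolding icr_def ..
  have f2: "drop_st n ?t = exc n (inv ?t)" using inv_exc[OF tp] by simp
  have f3: "exc n ?t + fix_st n ?t = drop_st n (inv ?t) + fix_st n (inv ?t)" using inv_drop[OF tp] inv_fix[OF tp] by simp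
  have f4: "cda n ?t = cdd n (inv ?t)" using inv_cdd[OF tp] by simp
  have f5: "cdd n ?t = cda n (inv ?t)" using inv_cda[OF tp] by simp
  have f6: "cval n ?t = cval n (inv ?t)" using inv_cval[OF tp] by simp
  have f7: "cpk n ?t = cpk n (inv ?t)" using inv_cpk[OF tp] by simp
  have f8: "fix_st n ?t = fix_st n (inv ?t)" using inv_fix[OF tp] by simp
  show "(icr n ?t, drop_st n ?t, exc n ?t + fix_st n ?t, cda n ?t, cdd n ?t, cval n ?t, cpk n ?t, fix_st n ?t)
      = (cros n (inv ?t), exc n (inv ?t), drop_st n (inv ?t) + fix_st n (inv ?t),
         cdd n (inv ?t), cda n (inv ?t), cval n (inv ?t), cpk n (inv ?t), fix_st n (inv ?t))"
    using f1 f2 f3 f4 f5 f6 f7 f8 by (simp only: prod.inject)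
qed


end
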